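(* Let $D'$ be a Falk subcomplex of type $s_3$ in the Artin complex $D(B_3)$. Then the orthoscheme metric on $D'$ is $\mathrm{CAT}(0)$.
   Context: $A(B_3)=\langle s_1,s_2,s_3 \mid s_1s_2s_1=s_2s_1s_2,\ s_1s_3=s_3s_1,\ s_2s_3s_2s_3=s_3s_2s_3s_2\rangle$ and $W(B_3)$ is its quotient by $s_i^2=1$. For $i=1,2,3$, $\hat s_i$ denotes the standard parabolic subgroup generated by the other two generators (in $A(B_3)$ or $W(B_3)$). The Artin complex $D(B_3)$ (resp. Coxeter complex $C(B_3)$) has vertices the cosets $g\hat s_i$ in $A(B_3)$ (resp. $W(B_3)$), of type $\hat s_i$, and a set of vertices spans a simplex iff the cosets have nonempty common intersection; $C(B_3)$ is a triangulation of the 2-sphere on which $W(B_3)$ acts by reflections. Let $\rho:D(B_3)\to C(B_3)$ be the simplicial map induced by the quotient $A(B_3)\to W(B_3)$. A Falk subcomplex of type $s_3$: take a reflection $r\in W(B_3)$ conjugate to $s_3$, let $H$ be the subcomplex of $C(B_3)$ fixed pointwise by $r$, choose one of the two components of $C(B_3)\setminus H$, let $U$ be the largest closed subcomplex of $C(B_3)$ contained in that component, and take a lift of $U$ along $\rho$ (a subcomplex of $D(B_3)$ mapped isomorphically onto $U$ by $\rho$). The orthoscheme metric on $D'$ is the piecewise Euclidean length metric in which each 2-simplex is a Euclidean isosceles right triangle with the right angle at its vertex of type $\hat s_2$ (angles $\pi/4$ at the vertices of types $\hat s_1$ and $\hat s_3$). *)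

theory Defs
  imports "HOL-Analysis.Analysis"
begin

datatype gen = S1 | S2 | S3

text \<open>A letter is a generator together with an exponent sign (True = +1, False = -1).\<close>
type_synonym word = "(gen \<times> bool) list"

definition winv :: "word \<Rightarrow> word" where
  "winv w = rev (map (\<lambda>(i,b). (i, \<not> b)) w)"

definition artin_rels :: "(word \<times> word) set" where
  "artin_rels =
     {([(S1,True),(S2,True),(S1,True)], [(S2,True),(S1,True),(S2,True)]),
      ([(S1,True),(S3,True)], [(S3,True),(S1,True)]),
      ([(S2,True),(S3,True),(S2,True),(S3,True)], [(S3,True),(S2,True),(S3,True),(S2,True)])}"

text \<open>Word equivalence: equality in A(B_3) if \<open>cox = False\<close>, equality in W(B_3) (extra
  relations s_i^2 = 1) if \<open>cox = True\<close>.\<close>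
inductive geq :: "bool \<Rightarrow> word \<Rightarrow> word \<Rightarrow> bool" for cox where
  geq_refl: "geq cox w w"
| geq_sym: "geq cox u w \<Longrightarrow> geq cox w u"
| geq_trans: "geq cox u v \<Longrightarrow> geq cox v w \<Longrightarrow> geq cox u w"
| geq_free: "geq cox (u @ [(i,b),(i,\<not> b)] @ v) (u @ v)"
| geq_rel: "(l, r) \<in> artin_rels \<Longrightarrow> geq cox (u @ l @ v) (u @ r @ v)"
| geq_sq: "cox \<Longrightarrow> geq cox (u @ [(i,True),(i,True)] @ v) (u @ v)"

text \<open>Words representing elements of the standard parabolic subgroup \<open>\<hat>s_i\<close>
  (generated by the generators other than s_i).\<close>
definition parab :: "gen \<Rightarrow> word set" where
  "parab i = {w. \<forall>(j,b)\<in>set w. j \<noteq> i}"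

definition coset :: "bool \<Rightarrow> word \<Rightarrow> gen \<Rightarrow> word set" where
  "coset cox g i = {w. \<exists>u\<in>parab i. geq cox w (g @ u)}"

text \<open>A vertex is a pair (type, coset). A simplicial complex is a set of simplices
  (finite nonempty vertex sets).\<close>
type_synonym vertex = "gen \<times> word set"

definition verts :: "bool \<Rightarrow> vertex set" where
  "verts cox = {(i, coset cox g i) | g i. True}"

definition cplx :: "bool \<Rightarrow> vertex set set" where
  "cplx cox = {\<sigma>. \<sigma> \<noteq> {} \<and> finite \<sigma> \<and> \<sigma> \<subseteq> verts cox \<and> \<Inter> (snd ` \<sigma>) \<noteq> {}}"

abbreviation DB3 :: "vertex set set" where "DB3 \<equiv> cplx False"
abbreviation CB3 :: "vertex set set" where "CB3 \<equiv> cplx True"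

text \<open>The simplicial map rho : D(B_3) \<rightarrow> C(B_3) induced by A(B_3) \<rightarrow> W(B_3):
  g \<hat>s_i \<mapsto> (image of g) \<hat>s_i.\<close>
definition rho :: "vertex \<Rightarrow> vertex" where
  "rho v = (fst v, {w. \<exists>a\<in>snd v. geq True w a})"

definition wact :: "word \<Rightarrow> vertex \<Rightarrow> vertex" where
  "wact r v = (fst v, {w. \<exists>a\<in>snd v. geq True w (r @ a)})"

definition is_reflection_conj_s3 :: "word \<Rightarrow> bool" where
  "is_reflection_conj_s3 r \<longleftrightarrow> (\<exists>g. geq True r (g @ [(S3,True)] @ winv g))"

definition fixcplx :: "word \<Rightarrow> vertex set set" where
  "fixcplx r = {\<sigma>\<in>CB3. \<forall>v\<in>\<sigma>. wact r v = v}"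

definition csimp :: "'v set \<Rightarrow> ('v \<Rightarrow> real) set" where
  "csimp \<sigma> = {p. (\<forall>v. v \<notin> \<sigma> \<longrightarrow> p v = 0) \<and> (\<forall>v\<in>\<sigma>. 0 \<le> p v) \<and> sum p \<sigma> = 1}"

definition realize :: "'v set set \<Rightarrow> ('v \<Rightarrow> real) set" where
  "realize K = (\<Union>\<sigma>\<in>K. csimp \<sigma>)"

definition subcomplex :: "'v set set \<Rightarrow> 'v set set \<Rightarrow> bool" where
  "subcomplex L K \<longleftrightarrow> L \<subseteq> K \<and> (\<forall>\<sigma>\<in>L. \<forall>\<tau>. \<tau> \<noteq> {} \<and> \<tau> \<subseteq> \<sigma> \<longrightarrow> \<tau> \<in> L)"

definition is_lift :: "vertex set set \<Rightarrow> vertex set set \<Rightarrow> bool" where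
  "is_lift D' U \<longleftrightarrow> subcomplex D' DB3 \<and> inj_on rho (\<Union>D') \<and> (\<lambda>\<sigma>. rho ` \<sigma>) ` D' = U"

text \<open>Falk subcomplex of type s_3.  The realization of C(B_3) carries the (product =
  Euclidean, since C(B_3) is finite) topology of functions vertex \<Rightarrow> real.\<close>
definition falk_s3 :: "vertex set set \<Rightarrow> bool" where
  "falk_s3 D' \<longleftrightarrow> (\<exists>r x U. is_reflection_conj_s3 r \<and>
      x \<in> realize CB3 - realize (fixcplx r) \<and>
      U = {\<sigma>\<in>CB3. csimp \<sigma> \<subseteq> connected_component_set (realize CB3 - realize (fixcplx r)) x} \<and>
      is_lift D' U)"

text \<open>Each closed simplex is mapped affinely (via vertex types) into the Euclidean plane
  (= complex plane): type \<hat>s_2 \<mapsto> 0, \<hat>s_1 \<mapsto> 1, \<hat>s_3 \<mapsto> i; on a 2-simplex this is an isometry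
  onto an isosceles right triangle with right angle at the \<hat>s_2 vertex.\<close>
fun corner :: "gen \<Rightarrow> complex" where
  "corner S1 = 1" | "corner S2 = 0" | "corner S3 = \<i>"

definition opos :: "(vertex \<Rightarrow> real) \<Rightarrow> complex" where
  "opos p = (\<Sum>v\<in>{v. p v \<noteq> 0}. complex_of_real (p v) * corner (fst v))"

text \<open>Piecewise Euclidean length (intrinsic) metric: infimum of lengths of strings of points
  whose consecutive members lie in a common closed simplex.\<close>
definition string_ok :: "vertex set set \<Rightarrow> (vertex \<Rightarrow> real) list \<Rightarrow> bool" where
  "string_ok K xs \<longleftrightarrow> xs \<noteq> [] \<and>
     (\<forall>(a,b)\<in>set (zip xs (tl xs)). \<exists>\<sigma>\<in>K. a \<in> csimp \<sigma> \<and> b \<in> csimp \<sigma>)"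

definition string_len :: "(vertex \<Rightarrow> real) list \<Rightarrow> real" where
  "string_len xs = sum_list (map (\<lambda>(a,b). cmod (opos a - opos b)) (zip xs (tl xs)))"

definition orth_dist :: "vertex set set \<Rightarrow> (vertex \<Rightarrow> real) \<Rightarrow> (vertex \<Rightarrow> real) \<Rightarrow> real" where
  "orth_dist K x y = Inf {string_len xs | xs. string_ok K xs \<and> hd xs = x \<and> last xs = y}"

definition metric_on :: "'a set \<Rightarrow> ('a \<Rightarrow> 'a \<Rightarrow> real) \<Rightarrow> bool" where
  "metric_on X d \<longleftrightarrow> (\<forall>x\<in>X. \<forall>y\<in>X. 0 \<le> d x y \<and> (d x y = 0 \<longleftrightarrow> x = y) \<and> d x y = d y x) \<and>
     (\<forall>x\<in>X. \<forall>y\<in>X. \<forall>z\<in>X. d x z \<le> d x y + d y z)"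

definition geodesic_path :: "'a set \<Rightarrow> ('a \<Rightarrow> 'a \<Rightarrow> real) \<Rightarrow> (real \<Rightarrow> 'a) \<Rightarrow> 'a \<Rightarrow> 'a \<Rightarrow> bool" where
  "geodesic_path X d \<gamma> a b \<longleftrightarrow> \<gamma> 0 = a \<and> \<gamma> (d a b) = b \<and>
     (\<forall>s\<in>{0..d a b}. \<gamma> s \<in> X) \<and>
     (\<forall>s\<in>{0..d a b}. \<forall>t\<in>{0..d a b}. d (\<gamma> s) (\<gamma> t) = \<bar>s - t\<bar>)"

definition cmp_pt :: "complex \<Rightarrow> complex \<Rightarrow> real \<Rightarrow> real \<Rightarrow> complex" where
  "cmp_pt A B L s = A + complex_of_real (s / L) * (B - A)"

definition CAT0 :: "'a set \<Rightarrow> ('a \<Rightarrow> 'a \<Rightarrow> real) \<Rightarrow> bool" where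
  "CAT0 X d \<longleftrightarrow> metric_on X d \<and>
    (\<forall>a\<in>X. \<forall>b\<in>X. \<exists>\<gamma>. geodesic_path X d \<gamma> a b) \<and>
    (\<forall>p\<in>X. \<forall>q\<in>X. \<forall>r\<in>X. \<forall>\<gamma>1 \<gamma>2 \<gamma>3 P Q R.
       geodesic_path X d \<gamma>1 p q \<and> geodesic_path X d \<gamma>2 q r \<and> geodesic_path X d \<gamma>3 r p \<and>
       cmod (P - Q) = d p q \<and> cmod (Q - R) = d q r \<and> cmod (R - P) = d r p \<longrightarrow>
       (\<forall>(\<gamma>, A, B, L) \<in> {(\<gamma>1, P, Q, d p q), (\<gamma>2, Q, R, d q r), (\<gamma>3, R, P, d r p)}.
        \<forall>(\<gamma>', A', B', L') \<in> {(\<gamma>1, P, Q, d p q), (\<gamma>2, Q, R, d q r), (\<gamma>3, R, P, d r p)}.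
        \<forall>s\<in>{0..L}. \<forall>t\<in>{0..L'}.
          d (\<gamma> s) (\<gamma>' t) \<le> cmod (cmp_pt A B L s - cmp_pt A' B' L' t)))"

end

theory Submission
  imports Defs
begin

fun gact :: "gen \<Rightarrow> int \<times> int \<times> int \<Rightarrow> int \<times> int \<times> int" where
  "gact S1 (a,b,c) = (b,a,c)" | "gact S2 (a,b,c) = (a,c,b)" | "gact S3 (a,b,c) = (a,b,-c)"

primrec act :: "word \<Rightarrow> int \<times> int \<times> int \<Rightarrow> int \<times> int \<times> int" where
  "act [] x = x" | "act (l#w) x = gact (fst l) (act w x)"

definition key :: "word \<Rightarrow> int \<times> int \<times> int" where "key w = act w (1,2,3)"

lemma act_append[simp]: "act (u@v) x = act u (act v x)"
  by (induct u) auto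

lemma gact_gact[simp]: "gact s (gact s x) = x"
  by (cases s; cases x) auto

lemma geq_sound: "geq c u w \<Longrightarrow> c \<Longrightarrow> act u = act w"
proof (induct rule: geq.induct)
  case (geq_rel l r u v)
  have "act l = act r" using geq_rel(1) unfolding artin_rels_def
    by (auto simp: fun_eq_iff)
  then show ?case by (intro ext) simp
qed (auto simp: fun_eq_iff)

lemma geq_cong: "geq c u w \<Longrightarrow> geq c (x@u@y) (x@w@y)"
proof (induct rule: geq.induct)
  case (geq_refl w) then show ?case by (rule geq.geq_refl)
next
  case (geq_sym u w) show ?case by (rule geq.geq_sym[OF geq_sym(2)])
next
  case (geq_trans u v w) then show ?case by (metis geq.geq_trans)
next
  case (geq_free u i b v)
  show ?case using geq.geq_free[where u="x@u" and v="v@y" and i=i and b=b] by simp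
next
  case (geq_rel l r u v)
  show ?case using geq.geq_rel[OF geq_rel, where u="x@u" and v="v@y"] by simp
next
  case (geq_sq u i v)
  show ?case using geq.geq_sq[OF geq_sq, where u="x@u" and v="v@y" and i=i] by simp
qed

definition moves :: "(word \<times> word) list" where
  "moves = [([(S1,True),(S2,True),(S1,True)], [(S2,True),(S1,True),(S2,True)]),
            ([(S2,True),(S1,True),(S2,True)], [(S1,True),(S2,True),(S1,True)]),
            ([(S1,True),(S3,True)], [(S3,True),(S1,True)]),
            ([(S3,True),(S1,True)], [(S1,True),(S3,True)]),
            ([(S2,True),(S3,True),(S2,True),(S3,True)], [(S3,True),(S2,True),(S3,True),(S2,True)]),
            ([(S3,True),(S2,True),(S3,True),(S2,True)], [(S2,True),(S3,True),(S2,True),(S3,True)]),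
            ([(S1,True),(S1,True)], []), ([(S2,True),(S2,True)], []), ([(S3,True),(S3,True)], []),
            ([], [(S1,True),(S1,True)]), ([], [(S2,True),(S2,True)]), ([], [(S3,True),(S3,True)])]"

lemma moves_sound: "(l,r) \<in> set moves \<Longrightarrow> geq True (u@l@v) (u@r@v)"
proof -
  assume a: "(l,r) \<in> set moves"
  have R: "\<And>l r. (l,r) \<in> artin_rels \<Longrightarrow> geq True (u@l@v) (u@r@v)" by (rule geq_rel)
  have R': "\<And>l r. (l,r) \<in> artin_rels \<Longrightarrow> geq True (u@r@v) (u@l@v)" by (rule geq_sym, rule geq_rel)
  have Q: "\<And>i. geq True (u@[(i,True),(i,True)]@v) (u@[]@v)" by (simp add: geq_sq[of True u _ v, simplified])
  have Q': "\<And>i. geq True (u@[]@v) (u@[(i,True),(i,True)]@v)" by (rule geq_sym, simp add: geq_sq[of True u _ v, simplified])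
  from a show ?thesis unfolding moves_def
    apply (simp only: set_simps insert_iff empty_iff)
    apply (elim disjE)
    by (auto intro: R R' Q Q' simp: artin_rels_def simp del: append.simps append_Nil)
qed

fun apply_mv :: "nat \<times> nat \<Rightarrow> word \<Rightarrow> word option" where
  "apply_mv (k,m) w = (if m < length moves \<and> k \<le> length w \<and> take (length (fst (moves!m))) (drop k w) = fst (moves!m)
      then Some (take k w @ snd (moves!m) @ drop (k + length (fst (moves!m))) w) else None)"

fun run :: "word \<Rightarrow> (nat \<times> nat) list \<Rightarrow> word option" where
  "run w [] = Some w"
| "run w (c#cs) = (case apply_mv c w of None \<Rightarrow> None | Some w' \<Rightarrow> run w' cs)"

lemma apply_mv_sound: "apply_mv c w = Some w' \<Longrightarrow> geq True w w'"
proof -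
  obtain k m where c: "c = (k,m)" by force
  assume h: "apply_mv c w = Some w'"
  obtain l r where lr: "moves!m = (l,r)" by force
  from h c lr have m: "m < length moves" and k: "k \<le> length w" and t: "take (length l) (drop k w) = l"
    and w': "w' = take k w @ r @ drop (k + length l) w" by (auto split: if_splits)
  have "w = take k w @ take (length l) (drop k w) @ drop (length l) (drop k w)" by (metis append_take_drop_id)
  also have "\<dots> = take k w @ l @ drop (k + length l) w" using t by (simp add: add.commute del: append_take_drop_id)
  finally have w: "w = take k w @ l @ drop (k + length l) w" .
  have "(l,r) \<in> set moves" using m lr by (metis nth_mem)
  from moves_sound[OF this] show ?thesis using w w' by metis
qed

lemma run_sound: "run w cs = Some w' \<Longrightarrow> geq True w w'"
proof (induct cs arbitrary: w)
  case Nil then show ?case by (auto intro: geq_refl)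
next
  case (Cons c cs)
  then obtain w1 where a: "apply_mv c w = Some w1" and r: "run w1 cs = Some w'" by (auto split: option.splits)
  show ?case using geq_trans[OF apply_mv_sound[OF a] Cons(1)[OF r]] .
qed

definition nf_tab :: "((int \<times> int \<times> int) \<times> word) list" where
  "nf_tab = [((1,2,3),[]),
    ((2,1,3),[(S1,True)]),
    ((1,3,2),[(S2,True)]),
    ((1,2,-3),[(S3,True)]),
    ((2,3,1),[(S2,True),(S1,True)]),
    ((2,1,-3),[(S3,True),(S1,True)]),
    ((3,1,2),[(S1,True),(S2,True)]),
    ((1,3,-2),[(S3,True),(S2,True)]),
    ((1,-3,2),[(S2,True),(S3,True)]),
    ((3,2,1),[(S1,True),(S2,True),(S1,True)]),
    ((2,3,-1),[(S3,True),(S2,True),(S1,True)]),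
    ((2,-3,1),[(S2,True),(S3,True),(S1,True)]),
    ((3,1,-2),[(S3,True),(S1,True),(S2,True)]),
    ((1,-2,3),[(S2,True),(S3,True),(S2,True)]),
    ((-3,1,2),[(S1,True),(S2,True),(S3,True)]),
    ((1,-3,-2),[(S3,True),(S2,True),(S3,True)]),
    ((3,2,-1),[(S3,True),(S1,True),(S2,True),(S1,True)]),
    ((2,-1,3),[(S2,True),(S3,True),(S2,True),(S1,True)]),
    ((-3,2,1),[(S1,True),(S2,True),(S3,True),(S1,True)]),
    ((2,-3,-1),[(S3,True),(S2,True),(S3,True),(S1,True)]),
    ((3,-2,1),[(S2,True),(S3,True),(S1,True),(S2,True)]),
    ((-2,1,3),[(S1,True),(S2,True),(S3,True),(S2,True)]),
    ((1,-2,-3),[(S3,True),(S2,True),(S3,True),(S2,True)]),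
    ((-3,1,-2),[(S3,True),(S1,True),(S2,True),(S3,True)]),
    ((3,-1,2),[(S2,True),(S3,True),(S1,True),(S2,True),(S1,True)]),
    ((-1,2,3),[(S1,True),(S2,True),(S3,True),(S2,True),(S1,True)]),
    ((2,-1,-3),[(S3,True),(S2,True),(S3,True),(S2,True),(S1,True)]),
    ((-3,2,-1),[(S3,True),(S1,True),(S2,True),(S3,True),(S1,True)]),
    ((-2,3,1),[(S1,True),(S2,True),(S3,True),(S1,True),(S2,True)]),
    ((3,-2,-1),[(S3,True),(S2,True),(S3,True),(S1,True),(S2,True)]),
    ((-2,1,-3),[(S3,True),(S1,True),(S2,True),(S3,True),(S2,True)]),
    ((-3,-2,1),[(S2,True),(S3,True),(S1,True),(S2,True),(S3,True)]),
    ((-1,3,2),[(S1,True),(S2,True),(S3,True),(S1,True),(S2,True),(S1,True)]),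
    ((3,-1,-2),[(S3,True),(S2,True),(S3,True),(S1,True),(S2,True),(S1,True)]),
    ((-1,2,-3),[(S3,True),(S1,True),(S2,True),(S3,True),(S2,True),(S1,True)]),
    ((-3,-1,2),[(S2,True),(S3,True),(S1,True),(S2,True),(S3,True),(S1,True)]),
    ((-2,3,-1),[(S3,True),(S1,True),(S2,True),(S3,True),(S1,True),(S2,True)]),
    ((-2,-3,1),[(S2,True),(S3,True),(S1,True),(S2,True),(S3,True),(S2,True)]),
    ((-3,-2,-1),[(S3,True),(S2,True),(S3,True),(S1,True),(S2,True),(S3,True)]),
    ((-1,3,-2),[(S3,True),(S1,True),(S2,True),(S3,True),(S1,True),(S2,True),(S1,True)]),
    ((-1,-3,2),[(S2,True),(S3,True),(S1,True),(S2,True),(S3,True),(S2,True),(S1,True)]),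
    ((-3,-1,-2),[(S3,True),(S2,True),(S3,True),(S1,True),(S2,True),(S3,True),(S1,True)]),
    ((-2,-1,3),[(S2,True),(S3,True),(S1,True),(S2,True),(S3,True),(S1,True),(S2,True)]),
    ((-2,-3,-1),[(S3,True),(S2,True),(S3,True),(S1,True),(S2,True),(S3,True),(S2,True)]),
    ((-1,-2,3),[(S2,True),(S3,True),(S1,True),(S2,True),(S3,True),(S1,True),(S2,True),(S1,True)]),
    ((-1,-3,-2),[(S3,True),(S2,True),(S3,True),(S1,True),(S2,True),(S3,True),(S2,True),(S1,True)]),
    ((-2,-1,-3),[(S3,True),(S2,True),(S3,True),(S1,True),(S2,True),(S3,True),(S1,True),(S2,True)]),
    ((-1,-2,-3),[(S3,True),(S2,True),(S3,True),(S1,True),(S2,True),(S3,True),(S1,True),(S2,True),(S1,True)])]"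
definition chain_tab :: "((gen \<times> (int \<times> int \<times> int)) \<times> (nat \<times> nat) list) list" where
  "chain_tab = [((S1,(1,2,3)),[]),
    ((S2,(1,2,3)),[]),
    ((S3,(1,2,3)),[]),
    ((S1,(2,1,3)),[(0,6)]),
    ((S2,(2,1,3)),[]),
    ((S3,(2,1,3)),[]),
    ((S1,(1,3,2)),[]),
    ((S2,(1,3,2)),[(0,7)]),
    ((S3,(1,3,2)),[]),
    ((S1,(1,2,-3)),[(0,2)]),
    ((S2,(1,2,-3)),[]),
    ((S3,(1,2,-3)),[(0,8)]),
    ((S1,(2,3,1)),[]),
    ((S2,(2,3,1)),[(0,7)]),
    ((S3,(2,3,1)),[]),
    ((S1,(2,1,-3)),[(0,2),(1,6)]),
    ((S2,(2,1,-3)),[]),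
    ((S3,(2,1,-3)),[(0,8)]),
    ((S1,(3,1,2)),[(0,6)]),
    ((S2,(3,1,2)),[(0,1)]),
    ((S3,(3,1,2)),[]),
    ((S1,(1,3,-2)),[(0,2)]),
    ((S2,(1,3,-2)),[]),
    ((S3,(1,3,-2)),[(0,8)]),
    ((S1,(1,-3,2)),[]),
    ((S2,(1,-3,2)),[(0,7)]),
    ((S3,(1,-3,2)),[]),
    ((S1,(3,2,1)),[(0,6)]),
    ((S2,(3,2,1)),[(1,0),(0,7)]),
    ((S3,(3,2,1)),[]),
    ((S1,(2,3,-1)),[(0,2)]),
    ((S2,(2,3,-1)),[]),
    ((S3,(2,3,-1)),[(0,8)]),
    ((S1,(2,-3,1)),[]),
    ((S2,(2,-3,1)),[(0,7)]),
    ((S3,(2,-3,1)),[]),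
    ((S1,(3,1,-2)),[(0,2),(1,6)]),
    ((S2,(3,1,-2)),[]),
    ((S3,(3,1,-2)),[(0,8)]),
    ((S1,(1,-2,3)),[]),
    ((S2,(1,-2,3)),[(0,7)]),
    ((S3,(1,-2,3)),[]),
    ((S1,(-3,1,2)),[(0,6)]),
    ((S2,(-3,1,2)),[(0,1),(2,2)]),
    ((S3,(-3,1,2)),[]),
    ((S1,(1,-3,-2)),[(0,2)]),
    ((S2,(1,-3,-2)),[(0,4)]),
    ((S3,(1,-3,-2)),[(0,8)]),
    ((S1,(3,2,-1)),[(0,2),(1,6)]),
    ((S2,(3,2,-1)),[]),
    ((S3,(3,2,-1)),[(0,8)]),
    ((S1,(2,-1,3)),[]),
    ((S2,(2,-1,3)),[(0,7)]),
    ((S3,(2,-1,3)),[]),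
    ((S1,(-3,2,1)),[(0,6)]),
    ((S2,(-3,2,1)),[(0,1),(2,2),(3,6)]),
    ((S3,(-3,2,1)),[]),
    ((S1,(2,-3,-1)),[(0,2)]),
    ((S2,(2,-3,-1)),[(0,4)]),
    ((S3,(2,-3,-1)),[(0,8)]),
    ((S1,(3,-2,1)),[]),
    ((S2,(3,-2,1)),[(0,7)]),
    ((S3,(3,-2,1)),[]),
    ((S1,(-2,1,3)),[(0,6)]),
    ((S2,(-2,1,3)),[(0,1),(2,2)]),
    ((S3,(-2,1,3)),[]),
    ((S1,(1,-2,-3)),[(0,2)]),
    ((S2,(1,-2,-3)),[(0,4),(3,7)]),
    ((S3,(1,-2,-3)),[(0,8)]),
    ((S1,(-3,1,-2)),[(0,2),(1,6)]),
    ((S2,(-3,1,-2)),[]),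
    ((S3,(-3,1,-2)),[(0,8)]),
    ((S1,(3,-1,2)),[]),
    ((S2,(3,-1,2)),[(0,7)]),
    ((S3,(3,-1,2)),[]),
    ((S1,(-1,2,3)),[(0,6)]),
    ((S2,(-1,2,3)),[(0,1),(2,2)]),
    ((S3,(-1,2,3)),[]),
    ((S1,(2,-1,-3)),[(0,2)]),
    ((S2,(2,-1,-3)),[(0,4),(3,7)]),
    ((S3,(2,-1,-3)),[(0,8)]),
    ((S1,(-3,2,-1)),[(0,2),(1,6)]),
    ((S2,(-3,2,-1)),[]),
    ((S3,(-3,2,-1)),[(0,8)]),
    ((S1,(-2,3,1)),[(0,6)]),
    ((S2,(-2,3,1)),[(0,1),(2,2),(3,6)]),
    ((S3,(-2,3,1)),[]),
    ((S1,(3,-2,-1)),[(0,2)]),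
    ((S2,(3,-2,-1)),[(0,4),(3,1)]),
    ((S3,(3,-2,-1)),[(0,8)]),
    ((S1,(-2,1,-3)),[(0,2),(1,6)]),
    ((S2,(-2,1,-3)),[]),
    ((S3,(-2,1,-3)),[(0,8)]),
    ((S1,(-3,-2,1)),[(2,3),(0,0),(2,4),(1,2)]),
    ((S2,(-3,-2,1)),[(0,7)]),
    ((S3,(-3,-2,1)),[]),
    ((S1,(-1,3,2)),[(0,6)]),
    ((S2,(-1,3,2)),[(0,1),(2,2),(3,6)]),
    ((S3,(-1,3,2)),[]),
    ((S1,(3,-1,-2)),[(0,2)]),
    ((S2,(3,-1,-2)),[(4,0),(0,4),(3,7)]),
    ((S3,(3,-1,-2)),[(0,8)]),
    ((S1,(-1,2,-3)),[(0,2),(1,6)]),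
    ((S2,(-1,2,-3)),[]),
    ((S3,(-1,2,-3)),[(0,8)]),
    ((S1,(-3,-1,2)),[(2,3),(0,0),(2,4),(1,2)]),
    ((S2,(-3,-1,2)),[(0,7)]),
    ((S3,(-3,-1,2)),[]),
    ((S1,(-2,3,-1)),[(0,2),(1,6)]),
    ((S2,(-2,3,-1)),[]),
    ((S3,(-2,3,-1)),[(0,8)]),
    ((S1,(-2,-3,1)),[(2,3),(0,0),(2,4),(1,2),(5,7)]),
    ((S2,(-2,-3,1)),[(0,7)]),
    ((S3,(-2,-3,1)),[]),
    ((S1,(-3,-2,-1)),[(0,2),(3,3),(1,0),(3,4),(2,2)]),
    ((S2,(-3,-2,-1)),[(0,4),(3,1),(5,2)]),
    ((S3,(-3,-2,-1)),[(0,8)]),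
    ((S1,(-1,3,-2)),[(0,2),(1,6)]),
    ((S2,(-1,3,-2)),[]),
    ((S3,(-1,3,-2)),[(0,8)]),
    ((S1,(-1,-3,2)),[(2,3),(0,0),(2,4),(1,2),(5,7)]),
    ((S2,(-1,-3,2)),[(0,7)]),
    ((S3,(-1,-3,2)),[]),
    ((S1,(-3,-1,-2)),[(0,2),(3,3),(1,0),(3,4),(2,2)]),
    ((S2,(-3,-1,-2)),[(6,3),(4,0),(0,4),(3,7)]),
    ((S3,(-3,-1,-2)),[(0,8)]),
    ((S1,(-2,-1,3)),[(2,3),(0,0),(2,4),(5,1),(1,2)]),
    ((S2,(-2,-1,3)),[(0,7)]),
    ((S3,(-2,-1,3)),[]),
    ((S1,(-2,-3,-1)),[(0,2),(3,3),(1,0),(3,4),(2,2),(6,7)]),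
    ((S2,(-2,-3,-1)),[(0,4),(3,1),(5,2)]),
    ((S3,(-2,-3,-1)),[(0,8)]),
    ((S1,(-1,-2,3)),[(6,0),(2,3),(0,0),(2,4),(1,2),(5,7)]),
    ((S2,(-1,-2,3)),[(0,7)]),
    ((S3,(-1,-2,3)),[]),
    ((S1,(-1,-3,-2)),[(0,2),(3,3),(1,0),(3,4),(2,2),(6,7)]),
    ((S2,(-1,-3,-2)),[(0,4),(3,1),(5,2)]),
    ((S3,(-1,-3,-2)),[(0,8)]),
    ((S1,(-2,-1,-3)),[(0,2),(3,3),(1,0),(3,4),(6,1),(2,2)]),
    ((S2,(-2,-1,-3)),[(6,3),(4,0),(0,4),(3,7)]),
    ((S3,(-2,-1,-3)),[(0,8)]),
    ((S1,(-1,-2,-3)),[(7,0),(0,2),(3,3),(1,0),(3,4),(2,2),(6,7)]),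
    ((S2,(-1,-2,-3)),[(6,3),(4,0),(0,4),(3,7)]),
    ((S3,(-1,-2,-3)),[(0,8)])]"

definition tab_ok :: bool where
  "tab_ok = list_all (\<lambda>(t,n). key n = t \<and> list_all (\<lambda>s. case map_of chain_tab (s,t) of
       Some ch \<Rightarrow> (case run ((s,True)#n) ch of Some n' \<Rightarrow> map_of nf_tab (gact s t) = Some n' | None \<Rightarrow> False) | None \<Rightarrow> False) [S1,S2,S3]) nf_tab"

lemma tab_ok: tab_ok
  by code_simp

lemma letter_True: "geq True (u@[(s,b)]@v) (u@[(s,True)]@v)"
proof (cases b)
  case True then show ?thesis by (simp add: geq_refl)
next
  case False
  have 0: "geq True ((u@[(s,False)])@[(s,True),(s,True)]@v) ((u@[(s,False)])@v)"
    by (rule geq_sq) simp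
  have 1: "geq True (u@[(s,False)]@v) ((u@[(s,False)])@[(s,True),(s,True)]@v)"
    using geq_sym[OF 0] by simp
  have 2: "geq True (u@[(s,False),(s,True)]@([(s,True)]@v)) (u@([(s,True)]@v))"
    using geq_free[where cox=True and u=u and i=s and b=False and v="[(s,True)]@v"] by simp
  show ?thesis using geq_trans[OF 1] 2 False by simp
qed

lemma nf_exists: "\<exists>n. map_of nf_tab (key w) = Some n \<and> geq True w n"
proof (induct w)
  case Nil
  have "map_of nf_tab (1,2,3) = Some []" by code_simp
  then show ?case by (auto simp: key_def intro: geq_refl)
next
  case (Cons l w)
  obtain s b where l: "l = (s,b)" by force
  from Cons obtain n where n: "map_of nf_tab (key w) = Some n" and g: "geq True w n" by blast
  have mem: "(key w, n) \<in> set nf_tab" using map_of_SomeD[OF n] .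
  from tab_ok mem have "case map_of chain_tab (s,key w) of
       Some ch \<Rightarrow> (case run ((s,True)#n) ch of Some n' \<Rightarrow> map_of nf_tab (gact s (key w)) = Some n' | None \<Rightarrow> False) | None \<Rightarrow> False"
    unfolding tab_ok_def list_all_iff by (cases s) auto
  then obtain ch n' where r: "run ((s,True)#n) ch = Some n'" and m: "map_of nf_tab (gact s (key w)) = Some n'"
    by (auto split: option.splits)
  have k: "key (l#w) = gact s (key w)" by (simp add: key_def l)
  have "geq True (l#w) (l#n)" using geq_cong[OF g, of "[l]" "[]"] by simp
  moreover have "geq True (l#n) ((s,True)#n)" using letter_True[of "[]" s b n] l by simp
  moreover have "geq True ((s,True)#n) n'" using run_sound[OF r] .
  ultimately show ?case using k m by (metis geq_trans)
qed

definition sel :: "int \<Rightarrow> int \<times> int \<times> int \<Rightarrow> int" where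
  "sel k x = sgn k * (if \<bar>k\<bar> = 1 then fst x else if \<bar>k\<bar> = 2 then fst (snd x) else snd (snd x))"

definition sp :: "int \<times> int \<times> int \<Rightarrow> int \<times> int \<times> int \<Rightarrow> int \<times> int \<times> int" where
  "sp t x = (sel (fst t) x, sel (fst (snd t)) x, sel (snd (snd t)) x)"

lemma sel_neg: "sel (-k) x = - sel k x" by (simp add: sel_def sgn_minus)

lemma sp_gact: "sp (gact s t) x = gact s (sp t x)"
  by (cases s; cases t) (simp_all add: sp_def sel_neg)

lemma act_sp: "act w x = sp (key w) x"
proof (induct w)
  case Nil then show ?case by (cases x) (simp add: key_def sp_def sel_def)
next
  case (Cons l w)
  have k: "key (l#w) = gact (fst l) (key w)" by (simp add: key_def)
  show ?case by (simp only: k sp_gact act.simps Cons)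
qed

lemma act_eq_iff_key: "act u = act w \<longleftrightarrow> key u = key w"
  apply (rule iffI)
   apply (simp add: key_def)
  apply (rule ext)
  apply (subst (1 2) act_sp)
  by simp

lemma completeness: "act u = act w \<Longrightarrow> geq True u w"
proof -
  assume "act u = act w"
  then have k: "key u = key w" by (simp add: act_eq_iff_key)
  obtain n where "map_of nf_tab (key u) = Some n" "geq True u n" using nf_exists by blast
  moreover obtain n' where "map_of nf_tab (key w) = Some n'" "geq True w n'" using nf_exists by blast
  ultimately show ?thesis using k by (metis geq_sym geq_trans option.inject)
qed

lemma geq_True_iff: "geq True u w \<longleftrightarrow> act u = act w"
  using completeness geq_sound by blast

definition allkeys :: "(int \<times> int \<times> int) list" where "allkeys = map fst nf_tab"

lemma key_in_allkeys: "key w \<in> set allkeys"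
  using nf_exists[of w] unfolding allkeys_def by (force dest: map_of_SomeD)

lemma allkeys_word: "t \<in> set allkeys \<Longrightarrow> \<exists>w. key w = t"
proof -
  assume "t \<in> set allkeys"
  then obtain n where n: "(t,n) \<in> set nf_tab" unfolding allkeys_def by auto
  have "\<forall>x\<in>set nf_tab. key (snd x) = fst x" using tab_ok unfolding tab_ok_def list_all_iff by auto
  with n show ?thesis by force
qed

lemma winv_Cons: "winv (l#g) = winv g @ [(fst l, \<not> snd l)]"
  by (cases l) (simp add: winv_def)

lemma act_winv1: "act (winv g) (act g x) = x"
  by (induct g arbitrary: x) (auto simp: winv_def winv_Cons)

lemma act_winv2: "act g (act (winv g) x) = x"
  by (induct g arbitrary: x) (auto simp: winv_def winv_Cons)

fun pp :: "gen \<Rightarrow> int \<times> int \<times> int" where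
  "pp S1 = (1,0,0)" | "pp S2 = (1,1,0)" | "pp S3 = (1,1,1)"

lemma parab_fix: "u \<in> parab i \<Longrightarrow> act u (pp i) = pp i"
proof (induct u)
  case Nil then show ?case by simp
next
  case (Cons l u)
  then have "u \<in> parab i" "fst l \<noteq> i" by (auto simp: parab_def split: prod.splits)
  then show ?case using Cons by (cases i; cases "fst l") auto
qed

definition stab_tab :: "(gen \<times> word) list" where
  "stab_tab = [(S1,[]),
    (S1,[(S2,True)]),
    (S1,[(S3,True)]),
    (S1,[(S3,True),(S2,True)]),
    (S1,[(S2,True),(S3,True)]),
    (S1,[(S2,True),(S3,True),(S2,True)]),
    (S1,[(S3,True),(S2,True),(S3,True)]),
    (S1,[(S3,True),(S2,True),(S3,True),(S2,True)]),
    (S2,[]),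
    (S2,[(S1,True)]),
    (S2,[(S3,True)]),
    (S2,[(S3,True),(S1,True)]),
    (S3,[]),
    (S3,[(S1,True)]),
    (S3,[(S2,True)]),
    (S3,[(S2,True),(S1,True)]),
    (S3,[(S1,True),(S2,True)]),
    (S3,[(S1,True),(S2,True),(S1,True)])]"

definition stab_ok :: bool where
  "stab_ok = list_all (\<lambda>t. list_all (\<lambda>i. sp t (pp i) = pp i \<longrightarrow>
      list_ex (\<lambda>(j,u). j = i \<and> key u = t \<and> list_all (\<lambda>(g,b). g \<noteq> i) u) stab_tab) [S1,S2,S3]) allkeys"

lemma stab_ok: stab_ok by code_simp

lemma stab_word: "act w (pp i) = pp i \<Longrightarrow> \<exists>u\<in>parab i. act u = act w"
proof -
  assume a: "act w (pp i) = pp i"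
  have "key w \<in> set allkeys" by (rule key_in_allkeys)
  with stab_ok a have "list_ex (\<lambda>(j,u). j = i \<and> key u = key w \<and> list_all (\<lambda>(g,b). g \<noteq> i) u) stab_tab"
    unfolding stab_ok_def list_all_iff by (cases i) (auto simp: act_sp)
  then obtain u where "key u = key w" "list_all (\<lambda>(g,b). g \<noteq> i) u" by (auto simp: list_ex_iff)
  then show ?thesis by (auto simp: parab_def list_all_iff act_eq_iff_key)
qed

definition Cset :: "gen \<Rightarrow> int \<times> int \<times> int \<Rightarrow> word set" where
  "Cset i q = {w. act w (pp i) = q}"

lemma coset_True: "coset True g i = Cset i (act g (pp i))"
proof (rule set_eqI, rule iffI)
  fix w assume "w \<in> coset True g i"
  then obtain u where "u \<in> parab i" "geq True w (g@u)" by (auto simp: coset_def)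
  then show "w \<in> Cset i (act g (pp i))" by (auto simp: Cset_def geq_True_iff parab_fix)
next
  fix w assume "w \<in> Cset i (act g (pp i))"
  then have "act (winv g @ w) (pp i) = pp i" by (simp add: Cset_def act_winv1)
  then obtain u where u: "u \<in> parab i" "act u = act (winv g @ w)" using stab_word by blast
  have "act w = act (g @ u)" using u(2) by (auto simp: fun_eq_iff act_winv2)
  then show "w \<in> coset True g i" using u(1) by (auto simp: coset_def geq_True_iff)
qed

definition pt :: "vertex \<Rightarrow> int \<times> int \<times> int" where
  "pt v = act (SOME w. w \<in> snd v) (pp (fst v))"

lemma Cset_mem: "g \<in> Cset i (act g (pp i))" by (simp add: Cset_def)

lemma pt_Cset: "pt (i, Cset i (act g (pp i))) = act g (pp i)"
proof -
  have "(SOME w. w \<in> Cset i (act g (pp i))) \<in> Cset i (act g (pp i))"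
    by (rule someI, rule Cset_mem)
  then show ?thesis by (simp add: pt_def Cset_def)
qed

lemma Cset_eq: "Cset i (act g (pp i)) = Cset i q \<Longrightarrow> act g (pp i) = q"
  using Cset_mem[of g i] by (simp add: Cset_def)

lemma verts_True_iff: "v \<in> verts True \<longleftrightarrow> (\<exists>g. v = (fst v, Cset (fst v) (act g (pp (fst v)))))"
  unfolding verts_def by (force simp: coset_True)

lemma verts_pt: "v \<in> verts True \<Longrightarrow> v = (fst v, Cset (fst v) (pt v))"
  using verts_True_iff pt_Cset by metis

lemma verts_pt_act: "v \<in> verts True \<Longrightarrow> \<exists>g. pt v = act g (pp (fst v))"
  using verts_True_iff pt_Cset by metis

lemma vert_eq: "v \<in> verts True \<Longrightarrow> v' \<in> verts True \<Longrightarrow> fst v = fst v' \<Longrightarrow> pt v = pt v' \<Longrightarrow> v = v'"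
  by (metis verts_pt)

lemma act_vert: "(i, Cset i (act g (pp i))) \<in> verts True"
  unfolding verts_True_iff by auto

lemma sp_vert: "t \<in> set allkeys \<Longrightarrow> (i, Cset i (sp t (pp i))) \<in> verts True \<and> pt (i, Cset i (sp t (pp i))) = sp t (pp i)"
proof -
  assume "t \<in> set allkeys"
  then obtain w where "key w = t" using allkeys_word by blast
  then have "sp t (pp i) = act w (pp i)" by (simp add: act_sp)
  then show ?thesis using act_vert pt_Cset by metis
qed

lemma mem_snd_vert: "v \<in> verts True \<Longrightarrow> w \<in> snd v \<longleftrightarrow> sp (key w) (pp (fst v)) = pt v"
  by (subst verts_pt, assumption) (simp add: Cset_def act_sp)

lemma CB3_iff: "\<sigma> \<in> CB3 \<longleftrightarrow> \<sigma> \<noteq> {} \<and> finite \<sigma> \<and> \<sigma> \<subseteq> verts True \<and>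
    (\<exists>t\<in>set allkeys. \<forall>v\<in>\<sigma>. sp t (pp (fst v)) = pt v)"
proof -
  have "\<sigma> \<subseteq> verts True \<Longrightarrow> (\<Inter> (snd ` \<sigma>) \<noteq> {}) \<longleftrightarrow> (\<exists>t\<in>set allkeys. \<forall>v\<in>\<sigma>. sp t (pp (fst v)) = pt v)"
  proof
    assume s: "\<sigma> \<subseteq> verts True" and "\<Inter> (snd ` \<sigma>) \<noteq> {}"
    then obtain w where "\<forall>v\<in>\<sigma>. w \<in> snd v" by auto
    then show "\<exists>t\<in>set allkeys. \<forall>v\<in>\<sigma>. sp t (pp (fst v)) = pt v"
      using s mem_snd_vert key_in_allkeys by blast
  next
    assume s: "\<sigma> \<subseteq> verts True" and "\<exists>t\<in>set allkeys. \<forall>v\<in>\<sigma>. sp t (pp (fst v)) = pt v"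
    then obtain t where "t \<in> set allkeys" "\<forall>v\<in>\<sigma>. sp t (pp (fst v)) = pt v" by blast
    moreover obtain w where "key w = t" using allkeys_word \<open>t \<in> set allkeys\<close> by blast
    ultimately have "\<forall>v\<in>\<sigma>. w \<in> snd v" using s mem_snd_vert by blast
    then show "\<Inter> (snd ` \<sigma>) \<noteq> {}" by auto
  qed
  then show ?thesis unfolding cplx_def by blast
qed

lemma UNIV_gen: "(UNIV :: gen set) = {S1,S2,S3}"
  using gen.exhaust by auto

lemma finite_verts: "finite (verts True)"
proof -
  have "verts True \<subseteq> (\<lambda>(i,t). (i, Cset i (sp t (pp i)))) ` (UNIV \<times> set allkeys)"
  proof
    fix v assume v: "v \<in> verts True"
    then obtain g where "pt v = act g (pp (fst v))" using verts_pt_act by blast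
    then have "pt v = sp (key g) (pp (fst v))" by (simp add: act_sp)
    then show "v \<in> (\<lambda>(i,t). (i, Cset i (sp t (pp i)))) ` (UNIV \<times> set allkeys)"
      using verts_pt[OF v] key_in_allkeys by (auto intro!: image_eqI[where x="(fst v, key g)"])
  qed
  moreover have "finite (UNIV :: gen set)" by (simp add: UNIV_gen)
  ultimately show ?thesis by (meson finite_SigmaI finite_imageI finite_set finite_subset)
qed

lemma allkeys_set: "set allkeys = set [(-3,-2,-1),(-3,-2,1),(-3,-1,-2),(-3,-1,2),(-3,1,-2),(-3,1,2),(-3,2,-1),(-3,2,1),(-2,-3,-1),(-2,-3,1),(-2,-1,-3),(-2,-1,3),(-2,1,-3),(-2,1,3),(-2,3,-1),(-2,3,1),(-1,-3,-2),(-1,-3,2),(-1,-2,-3),(-1,-2,3),(-1,2,-3),(-1,2,3),(-1,3,-2),(-1,3,2),(1,-3,-2),(1,-3,2),(1,-2,-3),(1,-2,3),(1,2,-3),(1,2,3),(1,3,-2),(1,3,2),(2,-3,-1),(2,-3,1),(2,-1,-3),(2,-1,3),(2,1,-3),(2,1,3),(2,3,-1),(2,3,1),(3,-2,-1),(3,-2,1),(3,-1,-2),(3,-1,2),(3,1,-2),(3,1,2),(3,2,-1),(3,2,1)]"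
  by code_simp


definition cmp :: "nat \<Rightarrow> int \<times> int \<times> int \<Rightarrow> int" where
  "cmp j q = (if j = 1 then fst q else if j = 2 then fst (snd q) else snd (snd q))"

definition flip :: "nat \<Rightarrow> int \<times> int \<times> int \<Rightarrow> int \<times> int \<times> int" where
  "flip j q = (if j = 1 then -fst q else fst q, if j = 2 then -fst (snd q) else fst (snd q),
               if j = 3 then -snd (snd q) else snd (snd q))"

definition rj :: "int \<times> int \<times> int \<Rightarrow> nat" where
  "rj t = (if \<bar>fst t\<bar> = 3 then 1 else if \<bar>fst (snd t)\<bar> = 3 then 2 else 3)"

lemma sp_S3_flip: "t \<in> set allkeys \<Longrightarrow> sp t (gact S3 y) = flip (rj t) (sp t y)"
proof -
  assume "t \<in> set allkeys"
  then have "t \<in> set [(-3,-2,-1),(-3,-2,1),(-3,-1,-2),(-3,-1,2),(-3,1,-2),(-3,1,2),(-3,2,-1),(-3,2,1),(-2,-3,-1),(-2,-3,1),(-2,-1,-3),(-2,-1,3),(-2,1,-3),(-2,1,3),(-2,3,-1),(-2,3,1),(-1,-3,-2),(-1,-3,2),(-1,-2,-3),(-1,-2,3),(-1,2,-3),(-1,2,3),(-1,3,-2),(-1,3,2),(1,-3,-2),(1,-3,2),(1,-2,-3),(1,-2,3),(1,2,-3),(1,2,3),(1,3,-2),(1,3,2),(2,-3,-1),(2,-3,1),(2,-1,-3),(2,-1,3),(2,1,-3),(2,1,3),(2,3,-1),(2,3,1),(3,-2,-1),(3,-2,1),(3,-1,-2),(3,-1,2),(3,1,-2),(3,1,2),(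3,2,-1),(3,2,1)]"
    by (simp only: allkeys_set)
  moreover obtain a b c where "y = (a,b,c)" by (cases y) auto
  ultimately show ?thesis
    by (simp only: set_simps insert_iff empty_iff) (elim disjE; simp add: sp_def sel_def flip_def rj_def)
qed

lemma refl_flip: "is_reflection_conj_s3 r \<Longrightarrow> \<exists>j\<in>{1,2,3}. \<forall>q. act r q = flip j q"
proof -
  assume "is_reflection_conj_s3 r"
  then obtain g where "geq True r (g @ [(S3,True)] @ winv g)" by (auto simp: is_reflection_conj_s3_def)
  then have a: "act r = act (g @ [(S3,True)] @ winv g)" by (simp add: geq_True_iff)
  have "\<forall>q. act r q = flip (rj (key g)) q"
  proof
    fix q
    let ?y = "act (winv g) q"
    have "act r q = act g (gact S3 ?y)" by (simp add: a)
    also have "\<dots> = sp (key g) (gact S3 ?y)" by (simp add: act_sp)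
    also have "\<dots> = flip (rj (key g)) (sp (key g) ?y)" by (rule sp_S3_flip[OF key_in_allkeys])
    also have "sp (key g) ?y = q" using act_winv2[of g q] by (simp add: act_sp)
    finally show "act r q = flip (rj (key g)) q" .
  qed
  moreover have "rj (key g) \<in> {1,2,3}" by (simp add: rj_def)
  ultimately show ?thesis by blast
qed

lemma wact_vert: "v \<in> verts True \<Longrightarrow> wact r v = (fst v, Cset (fst v) (act r (pt v)))"
proof -
  assume v: "v \<in> verts True"
  let ?i = "fst v"
  have sv: "snd v = Cset ?i (pt v)" using verts_pt[OF v] by (metis snd_conv)
  have "{w. \<exists>a\<in>snd v. geq True w (r @ a)} = Cset ?i (act r (pt v))"
  proof (rule set_eqI, rule iffI)
    fix w assume "w \<in> {w. \<exists>a\<in>snd v. geq True w (r @ a)}"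
    then obtain a where "a \<in> snd v" "act w = act (r @ a)" by (auto simp: geq_True_iff)
    then show "w \<in> Cset ?i (act r (pt v))" using sv by (simp add: Cset_def)
  next
    fix w assume w: "w \<in> Cset ?i (act r (pt v))"
    have "winv r @ w \<in> snd v" using w sv by (simp add: Cset_def act_winv1)
    moreover have "act w = act (r @ (winv r @ w))" by (auto simp: fun_eq_iff act_winv2)
    ultimately show "w \<in> {w. \<exists>a\<in>snd v. geq True w (r @ a)}" by (auto simp: geq_True_iff)
  qed
  then show ?thesis by (simp add: wact_def)
qed

lemma fixed_iff: "v \<in> verts True \<Longrightarrow> wact r v = v \<longleftrightarrow> act r (pt v) = pt v"
proof
  assume v: "v \<in> verts True" and f: "wact r v = v"
  obtain g where g: "pt v = act g (pp (fst v))" using verts_pt_act[OF v] by blast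
  have "Cset (fst v) (act (r@g) (pp (fst v))) = Cset (fst v) (pt v)"
    using f wact_vert[OF v] verts_pt[OF v] g by (metis act_append snd_conv)
  then have "act (r@g) (pp (fst v)) = pt v" by (rule Cset_eq)
  then show "act r (pt v) = pt v" using g by simp
next
  assume v: "v \<in> verts True" and "act r (pt v) = pt v"
  then show "wact r v = v" using wact_vert[OF v] verts_pt[OF v] by metis
qed

lemma flip_fix: "j \<in> {1,2,3} \<Longrightarrow> flip j q = q \<longleftrightarrow> cmp j q = 0"
  by (cases q) (auto simp: flip_def cmp_def)

definition ej :: "nat \<Rightarrow> int \<Rightarrow> int \<times> int \<times> int" where
  "ej j e = (if j = 1 then e else 0, if j = 2 then e else 0, if j = 3 then e else 0)"

definition C0 :: bool where
  "C0 = list_all (\<lambda>t. list_all (\<lambda>i. list_all (\<lambda>j. cmp j (sp t (pp i)) = -1 \<or> cmp j (sp t (pp i)) = 0 \<or> cmp j (sp t (pp i)) = 1) [1,2,3]) [S1,S2,S3]) allkeys"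
definition C1 :: bool where
  "C1 = list_all (\<lambda>t. list_all (\<lambda>j. list_all (\<lambda>i. cmp j (sp t (pp i)) \<ge> 0) [S1,S2,S3] \<or> list_all (\<lambda>i. cmp j (sp t (pp i)) \<le> 0) [S1,S2,S3]) [1,2,3]) allkeys"
definition C2 :: bool where
  "C2 = list_all (\<lambda>t. list_all (\<lambda>j. list_all (\<lambda>e. list_ex (\<lambda>i. cmp j (sp t (pp i)) = e) [S1,S2,S3] \<longrightarrow> list_ex (\<lambda>\<tau>. sp (sp t \<tau>) (pp S1) = ej j e \<and> list_all (\<lambda>i. cmp j (sp t (pp i)) = e \<longrightarrow> sp (sp t \<tau>) (pp i) = sp t (pp i)) [S1,S2,S3]) [(1,2,3),(2,1,3),(2,3,1)]) [1,-1]) [1,2,3]) allkeys"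
definition C4 :: bool where
  "C4 = list_all (\<lambda>j. list_all (\<lambda>e. list_ex (\<lambda>t. sp t (pp S1) = ej j e) allkeys) [1,-1]) [1,2,3]"
definition C3 :: bool where
  "C3 = list_all (\<lambda>t. list_all (\<lambda>j. list_all (\<lambda>e. cmp j (sp t (pp S1)) = e \<longrightarrow> sp t (pp S1) = ej j e) [1,-1]) [1,2,3]) allkeys"

lemma C0: C0 by code_simp
lemma C1: C1 by code_simp
lemma C2: C2 by code_simp
lemma C3: C3 by code_simp
lemma C4: C4 by code_simp

lemma gen_all: "(\<forall>i\<in>{S1,S2,S3}. P i) \<Longrightarrow> P i" by (cases i) auto

lemma gen_set: "i \<in> set [S1,S2,S3]" by (cases i) auto

lemma vals: "v \<in> verts True \<Longrightarrow> j \<in> {1,2,3} \<Longrightarrow> cmp j (pt v) \<in> {-1,0,1}"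
proof -
  assume v: "v \<in> verts True" and j: "j \<in> {1,2,3}"
  obtain g where g: "pt v = sp (key g) (pp (fst v))" using verts_pt_act[OF v] by (metis act_sp)
  have j': "j \<in> set [1,2,3]" using j by simp
  have "\<forall>t\<in>set allkeys. \<forall>i\<in>set [S1,S2,S3]. \<forall>j\<in>set [1,2,3]. cmp j (sp t (pp i)) = -1 \<or> cmp j (sp t (pp i)) = 0 \<or> cmp j (sp t (pp i)) = 1"
    using C0 unfolding C0_def list_all_iff .
  from bspec[OF bspec[OF bspec[OF this key_in_allkeys[of g]] gen_set[of "fst v"]] j'] g
  show ?thesis by simp
qed

lemma simplex_sign: "\<sigma> \<in> CB3 \<Longrightarrow> j \<in> {1,2,3} \<Longrightarrow> \<exists>s\<in>{1,-1::int}. \<forall>v\<in>\<sigma>. cmp j (pt v) = 0 \<or> cmp j (pt v) = s"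
proof -
  assume s: "\<sigma> \<in> CB3" and j: "j \<in> {1,2,3}"
  then obtain t where t: "t \<in> set allkeys" "\<forall>v\<in>\<sigma>. sp t (pp (fst v)) = pt v" by (auto simp: CB3_iff)
  have sub: "\<sigma> \<subseteq> verts True" using s by (simp add: CB3_iff)
  have j': "j \<in> set [1,2,3]" using j by simp
  have "\<forall>t\<in>set allkeys. \<forall>j\<in>set [1,2,3]. (\<forall>i\<in>set [S1,S2,S3]. cmp j (sp t (pp i)) \<ge> 0) \<or> (\<forall>i\<in>set [S1,S2,S3]. cmp j (sp t (pp i)) \<le> 0)"
    using C1 unfolding C1_def list_all_iff .
  from bspec[OF bspec[OF this t(1)] j']
  have A: "(\<forall>i\<in>set [S1,S2,S3]. cmp j (sp t (pp i)) \<ge> 0) \<or> (\<forall>i\<in>set [S1,S2,S3]. cmp j (sp t (pp i)) \<le> 0)" .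
  have V: "\<And>v. v \<in> \<sigma> \<Longrightarrow> cmp j (pt v) \<in> {-1,0,1}" using vals sub j by blast
  show ?thesis
  proof (rule disjE[OF A])
    assume h: "\<forall>i\<in>set [S1,S2,S3]. cmp j (sp t (pp i)) \<ge> 0"
    have "\<forall>v\<in>\<sigma>. cmp j (pt v) = 0 \<or> cmp j (pt v) = 1"
    proof
      fix v assume v: "v \<in> \<sigma>"
      have "cmp j (pt v) \<ge> 0" using h gen_set[of "fst v"] t(2) v by metis
      then show "cmp j (pt v) = 0 \<or> cmp j (pt v) = 1" using V[OF v] by auto
    qed
    then show ?thesis by blast
  next
    assume h: "\<forall>i\<in>set [S1,S2,S3]. cmp j (sp t (pp i)) \<le> 0"
    have "\<forall>v\<in>\<sigma>. cmp j (pt v) = 0 \<or> cmp j (pt v) = -1"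
    proof
      fix v assume v: "v \<in> \<sigma>"
      have "cmp j (pt v) \<le> 0" using h gen_set[of "fst v"] t(2) v by metis
      then show "cmp j (pt v) = 0 \<or> cmp j (pt v) = -1" using V[OF v] by auto
    qed
    then show ?thesis by blast
  qed
qed

lemma cvert: "j \<in> {1,2,3} \<Longrightarrow> e \<in> {1,-1} \<Longrightarrow> (S1, Cset S1 (ej j e)) \<in> verts True \<and> pt (S1, Cset S1 (ej j e)) = ej j e"
proof -
  assume j: "j \<in> {1,2,3}" and e: "e \<in> {1,-1}"
  have "\<forall>j\<in>set [1,2,3]. \<forall>e\<in>set [1,-1]. \<exists>t\<in>set allkeys. sp t (pp S1) = ej j e"
    using C4 unfolding C4_def list_all_iff list_ex_iff .
  then obtain t' where "t' \<in> set allkeys" "sp t' (pp S1) = ej j e" using j e by auto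
  then show ?thesis using sp_vert by metis
qed

lemma sp_comp: "t \<in> set allkeys \<Longrightarrow> \<tau> \<in> set allkeys \<Longrightarrow> sp t \<tau> \<in> set allkeys \<and> sp (sp t \<tau>) x = sp t (sp \<tau> x)"
proof -
  assume "t \<in> set allkeys" "\<tau> \<in> set allkeys"
  then obtain w u where w: "key w = t" and u: "key u = \<tau>" using allkeys_word by metis
  have "key (w@u) = act w (key u)" by (simp add: key_def)
  then have k: "key (w@u) = sp t \<tau>" using w u by (simp only: act_sp)
  have "sp t (sp \<tau> x) = act (w@u) x" using w u act_sp[of w] act_sp[of u] by simp
  also have "act (w@u) x = sp (key (w@u)) x" by (rule act_sp)
  finally show ?thesis using k key_in_allkeys[of "w@u"] by simp
qed

lemma cmp_ej: "j \<in> {1,2,3} \<Longrightarrow> cmp j (ej j e) = e"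
  by (auto simp: cmp_def ej_def)

definition F :: "nat \<Rightarrow> (vertex \<Rightarrow> real) \<Rightarrow> real" where
  "F j p = (\<Sum>v\<in>verts True. p v * real_of_int (cmp j (pt v)))"

lemma CB3_sub: "\<sigma> \<in> CB3 \<Longrightarrow> \<sigma> \<subseteq> verts True \<and> finite \<sigma> \<and> \<sigma> \<noteq> {}"
  by (simp add: CB3_iff)

lemma F_csimp: "\<sigma> \<subseteq> verts True \<Longrightarrow> p \<in> csimp \<sigma> \<Longrightarrow> F j p = (\<Sum>v\<in>\<sigma>. p v * real_of_int (cmp j (pt v)))"
  unfolding F_def
  by (rule sum.mono_neutral_right[OF finite_verts]) (auto simp: csimp_def)

lemma on_wall:
  assumes j: "j \<in> {1,2,3}" and r: "\<forall>q. act r q = flip j q" and p: "p \<in> realize (fixcplx r)"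
  shows "F j p = 0"
proof -
  from p obtain \<tau> where t: "\<tau> \<in> fixcplx r" "p \<in> csimp \<tau>" by (auto simp: realize_def)
  then have tc: "\<tau> \<in> CB3" and fx: "\<forall>v\<in>\<tau>. wact r v = v" by (auto simp: fixcplx_def)
  have sub: "\<tau> \<subseteq> verts True" using CB3_sub[OF tc] by blast
  have "\<forall>v\<in>\<tau>. cmp j (pt v) = 0"
  proof
    fix v assume v: "v \<in> \<tau>"
    then have "act r (pt v) = pt v" using fx fixed_iff sub by blast
    then show "cmp j (pt v) = 0" using r flip_fix[OF j] by metis
  qed
  then show ?thesis using F_csimp[OF sub t(2)] by simp
qed

lemma off_wall:
  assumes j: "j \<in> {1,2,3}" and r: "\<forall>q. act r q = flip j q"
    and p: "p \<in> realize CB3" and np: "p \<notin> realize (fixcplx r)"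
  shows "F j p \<noteq> 0"
proof -
  from p obtain \<sigma> where s: "\<sigma> \<in> CB3" "p \<in> csimp \<sigma>" by (auto simp: realize_def)
  have sub: "\<sigma> \<subseteq> verts True" and fin: "finite \<sigma>" using CB3_sub[OF s(1)] by auto
  have p0: "\<forall>v. v \<notin> \<sigma> \<longrightarrow> p v = 0" and pnn: "\<forall>v\<in>\<sigma>. 0 \<le> p v" and p1: "sum p \<sigma> = 1"
    using s(2) by (auto simp: csimp_def)
  define \<tau> where "\<tau> = {v\<in>\<sigma>. p v \<noteq> 0}"
  have ts: "\<tau> \<subseteq> \<sigma>" by (auto simp: \<tau>_def)
  have sumt: "sum p \<tau> = 1"
    using p1 sum.mono_neutral_left[OF fin ts, of p] by (auto simp: \<tau>_def)
  have tne: "\<tau> \<noteq> {}" using sumt by auto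
  have "\<exists>v\<in>\<tau>. cmp j (pt v) \<noteq> 0"
  proof (rule ccontr)
    assume "\<not> ?thesis"
    then have z: "\<forall>v\<in>\<tau>. cmp j (pt v) = 0" by blast
    obtain t where t: "t \<in> set allkeys" "\<forall>v\<in>\<sigma>. sp t (pp (fst v)) = pt v" using s(1) by (auto simp: CB3_iff)
    have tc: "\<tau> \<in> CB3" unfolding CB3_iff using tne ts fin sub t by (meson finite_subset subset_trans subsetD)
    have "\<forall>v\<in>\<tau>. wact r v = v"
    proof
      fix v assume v: "v \<in> \<tau>"
      have "flip j (pt v) = pt v" using z v flip_fix[OF j] by blast
      then show "wact r v = v" using fixed_iff[of v r] r v ts sub by auto
    qed
    then have "\<tau> \<in> fixcplx r" using tc by (simp add: fixcplx_def)
    moreover have "p \<in> csimp \<tau>" using p0 pnn sumt ts by (auto simp: csimp_def \<tau>_def)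
    ultimately show False using np by (auto simp: realize_def)
  qed
  then obtain v0 where v0: "v0 \<in> \<tau>" "cmp j (pt v0) \<noteq> 0" by blast
  obtain sg where sg: "sg \<in> {1,-1::int}" "\<forall>v\<in>\<sigma>. cmp j (pt v) = 0 \<or> cmp j (pt v) = sg"
    using simplex_sign[OF s(1) j] by blast
  have "of_int sg * F j p = (\<Sum>v\<in>\<sigma>. p v * real_of_int (sg * cmp j (pt v)))"
    by (simp add: F_csimp[OF sub s(2)] sum_distrib_left mult_ac)
  also have "\<dots> > 0"
  proof (rule sum_pos2[OF fin])
    show "v0 \<in> \<sigma>" using v0 ts by blast
    have "cmp j (pt v0) = sg" using sg v0 ts by blast
    moreover have "p v0 > 0" using v0 pnn ts by (force simp: \<tau>_def)
    moreover have "sg * sg = 1" using sg by auto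
    ultimately show "0 < p v0 * real_of_int (sg * cmp j (pt v0))" by simp
    show "\<And>v. v \<in> \<sigma> \<Longrightarrow> 0 \<le> p v * real_of_int (sg * cmp j (pt v))"
    proof -
      fix v assume v: "v \<in> \<sigma>"
      have "sg * cmp j (pt v) \<ge> 0" using sg v by auto
      then have "real_of_int (sg * cmp j (pt v)) \<ge> 0" by linarith
      then show "0 \<le> p v * real_of_int (sg * cmp j (pt v))" using pnn v by (simp only: mult_nonneg_nonneg)
    qed
  qed
  finally show ?thesis by auto
qed

lemma coord_cont: "continuous_on S (\<lambda>p::'a \<Rightarrow> real. p v)"
  by (rule continuous_on_subset[OF continuous_on_product_coordinates]) simp

lemma F_cont: "continuous_on S (F j)"
  unfolding F_def by (intro continuous_on_sum continuous_on_mult_right coord_cont)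

definition comb :: "('a \<Rightarrow> real) \<Rightarrow> ('a \<Rightarrow> real) \<Rightarrow> real \<Rightarrow> 'a \<Rightarrow> real" where
  "comb p q t = (\<lambda>v. (1 - t) * p v + t * q v)"

lemma comb_0[simp]: "comb p q 0 = p" and comb_1[simp]: "comb p q 1 = q"
  by (auto simp: comb_def)

lemma csimp_comb: "p \<in> csimp \<tau> \<Longrightarrow> q \<in> csimp \<tau> \<Longrightarrow> 0 \<le> t \<Longrightarrow> t \<le> 1 \<Longrightarrow> comb p q t \<in> csimp \<tau>"
  by (auto simp: csimp_def comb_def sum.distrib sum_distrib_left[symmetric])

lemma F_comb: "F j (comb p q t) = (1 - t) * F j p + t * F j q"
proof -
  have "\<And>v. comb p q t v * real_of_int (cmp j (pt v)) = (1 - t) * (p v * real_of_int (cmp j (pt v))) + t * (q v * real_of_int (cmp j (pt v)))"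
    by (simp add: comb_def distrib_right)
  then show ?thesis unfolding F_def by (simp add: sum.distrib sum_distrib_left)
qed

lemma seg_conn: "connected (comb p q ` {0..1})"
proof -
  have "continuous_on {0..1} (comb p q)"
    unfolding comb_def by (intro continuous_on_coordinatewise_then_product continuous_intros)
  then show ?thesis using connected_continuous_image connected_Icc by blast
qed

definition delta :: "'a \<Rightarrow> 'a \<Rightarrow> real" where "delta v = (\<lambda>w. if w = v then 1 else 0)"

lemma delta_csimp: "finite \<sigma> \<Longrightarrow> v \<in> \<sigma> \<Longrightarrow> delta v \<in> csimp \<sigma>"
  by (auto simp: csimp_def delta_def)

lemma F_delta: "v \<in> verts True \<Longrightarrow> F j (delta v) = real_of_int (cmp j (pt v))"
proof -
  assume v: "v \<in> verts True"
  have "\<And>w. delta v w * real_of_int (cmp j (pt w)) = (if w = v then real_of_int (cmp j (pt w)) else 0)"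
    by (simp add: delta_def)
  then show ?thesis unfolding F_def using v by (simp add: finite_verts)
qed

lemma realizeI: "\<sigma> \<in> K \<Longrightarrow> p \<in> csimp \<sigma> \<Longrightarrow> p \<in> realize K"
  by (auto simp: realize_def)

lemma star_piece:
  assumes j: "j \<in> {1,2,3}" and e: "e \<in> {1,-1::int}"
    and s: "\<sigma> \<in> CB3" and p: "p \<in> csimp \<sigma>" and pos: "real_of_int e * F j p > 0"
  shows "\<exists>S. connected S \<and> p \<in> S \<and> delta (S1, Cset S1 (ej j e)) \<in> S \<and>
     S \<subseteq> {p \<in> realize CB3. real_of_int e * F j p > 0}"
proof -
  define c where "c = (S1, Cset S1 (ej j e))"
  have c: "c \<in> verts True" "pt c = ej j e" using cvert[OF j e] by (auto simp: c_def)
  have cc: "cmp j (pt c) = e" using c cmp_ej[OF j] by simp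
  have sub: "\<sigma> \<subseteq> verts True" and fin: "finite \<sigma>" using CB3_sub[OF s] by auto
  have p0: "\<forall>v. v \<notin> \<sigma> \<longrightarrow> p v = 0" and pnn: "\<forall>v\<in>\<sigma>. 0 \<le> p v" and p1: "sum p \<sigma> = 1"
    using p by (auto simp: csimp_def)
  define \<sigma>p where "\<sigma>p = {v\<in>\<sigma>. cmp j (pt v) = e}"
  define Sp where "Sp = sum p \<sigma>p"
  have sps: "\<sigma>p \<subseteq> \<sigma>" by (auto simp: \<sigma>p_def)
  have ee: "e * e = 1" using e by auto
  have "real_of_int e * F j p = (\<Sum>v\<in>\<sigma>. p v * real_of_int (e * cmp j (pt v)))"
    by (simp add: F_csimp[OF sub p] sum_distrib_left mult_ac)
  also have "\<dots> \<le> (\<Sum>v\<in>\<sigma>. if v \<in> \<sigma>p then p v else 0)"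
  proof (rule sum_mono)
    fix v assume v: "v \<in> \<sigma>"
    have vv: "cmp j (pt v) \<in> {-1,0,1}" using vals sub v j by blast
    show "p v * real_of_int (e * cmp j (pt v)) \<le> (if v \<in> \<sigma>p then p v else 0)"
    proof (cases "v \<in> \<sigma>p")
      case True then show ?thesis using ee by (simp add: \<sigma>p_def)
    next
      case False
      then have "e * cmp j (pt v) \<le> 0" using vv e v by (auto simp: \<sigma>p_def)
      then have "real_of_int (e * cmp j (pt v)) \<le> 0" by linarith
      then show ?thesis using False pnn v by (simp add: mult_nonneg_nonpos)
    qed
  qed
  also have "\<dots> = Sp" unfolding Sp_def using sps fin
    by (simp add: sum.If_cases Int_absorb1 Int_absorb2)
  finally have Spos: "Sp > 0" using pos by linarith
  then have spne: "\<sigma>p \<noteq> {}" by (auto simp: Sp_def)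
  define q where "q = (\<lambda>v. if v \<in> \<sigma>p then p v / Sp else 0)"
  define \<tau> where "\<tau> = insert c \<sigma>p"
  have finp: "finite \<sigma>p" using finite_subset[OF sps fin] .
  have sumq: "sum q \<sigma>p = 1"
    using Spos by (simp add: q_def Sp_def sum_divide_distrib[symmetric])
  have "sum q \<sigma> = sum q \<sigma>p"
    by (rule sum.mono_neutral_right[OF fin sps]) (auto simp: q_def)
  then have qs: "q \<in> csimp \<sigma>"
    using sps pnn Spos sumq by (auto simp: csimp_def q_def)
  have qt: "q \<in> csimp \<tau>"
  proof -
    have "sum q \<tau> = sum q \<sigma>p"
      by (cases "c \<in> \<sigma>p") (auto simp: \<tau>_def q_def finp insert_absorb)
    then show ?thesis using sumq pnn Spos sps by (auto simp: csimp_def q_def \<tau>_def)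
  qed
  have Fq: "F j q = real_of_int e"
  proof -
    have "F j q = (\<Sum>v\<in>\<sigma>. q v * real_of_int (cmp j (pt v)))" by (rule F_csimp[OF sub qs])
    also have "\<dots> = (\<Sum>v\<in>\<sigma>. q v * real_of_int e)"
      by (rule sum.cong) (auto simp: q_def \<sigma>p_def)
    also have "\<dots> = real_of_int e" using qs by (simp add: csimp_def sum_distrib_right[symmetric])
    finally show ?thesis .
  qed
  have tc: "\<tau> \<in> CB3"
  proof -
    obtain t where t: "t \<in> set allkeys" "\<forall>v\<in>\<sigma>. sp t (pp (fst v)) = pt v" using s by (auto simp: CB3_iff)
    obtain v1 where v1: "v1 \<in> \<sigma>p" using spne by blast
    have ex: "list_ex (\<lambda>i. cmp j (sp t (pp i)) = e) [S1,S2,S3]"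
      using v1 t(2) gen_set[of "fst v1"] unfolding list_ex_iff \<sigma>p_def by force
    have C2': "\<forall>t\<in>set allkeys. \<forall>j\<in>set [1,2,3]. \<forall>e\<in>set [1,-1]. list_ex (\<lambda>i. cmp j (sp t (pp i)) = e) [S1,S2,S3] \<longrightarrow>
      (\<exists>\<tau>\<in>set [(1,2,3),(2,1,3),(2,3,1)]. sp (sp t \<tau>) (pp S1) = ej j e \<and> (\<forall>i\<in>set [S1,S2,S3]. cmp j (sp t (pp i)) = e \<longrightarrow> sp (sp t \<tau>) (pp i) = sp t (pp i)))"
      using C2 unfolding C2_def list_all_iff list_ex_iff[of _ "[(1,2,3),(2,1,3),(2,3,1)]"] .
    have j': "j \<in> set [1,2,3]" and e': "e \<in> set [1,-1]" using j e by auto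
    from mp[OF bspec[OF bspec[OF bspec[OF C2' t(1)] j'] e'] ex] obtain \<tau>0 where t0: "\<tau>0 \<in> set [(1,2,3),(2,1,3),(2,3,1)]"
      "sp (sp t \<tau>0) (pp S1) = ej j e" "\<forall>i\<in>set [S1,S2,S3]. cmp j (sp t (pp i)) = e \<longrightarrow> sp (sp t \<tau>0) (pp i) = sp t (pp i)"
      by blast
    have "\<tau>0 \<in> set allkeys" using t0(1) by (auto simp: allkeys_set)
    then have t'k: "sp t \<tau>0 \<in> set allkeys" using sp_comp t(1) by blast
    have "\<forall>v\<in>\<tau>. sp (sp t \<tau>0) (pp (fst v)) = pt v"
    proof
      fix v assume "v \<in> \<tau>"
      then consider "v = c" | "v \<in> \<sigma>p" by (auto simp: \<tau>_def)
      then show "sp (sp t \<tau>0) (pp (fst v)) = pt v"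
      proof cases
        case 1 then show ?thesis using t0(2) c by (simp add: c_def)
      next
        case 2
        then have "cmp j (sp t (pp (fst v))) = e" "v \<in> \<sigma>" using t(2) by (auto simp: \<sigma>p_def)
        then show ?thesis using t0(3) gen_set t(2) by metis
      qed
    qed
    moreover have "\<tau> \<noteq> {}" "finite \<tau>" "\<tau> \<subseteq> verts True" using finp sps sub c by (auto simp: \<tau>_def)
    ultimately show ?thesis using t'k by (auto simp: CB3_iff)
  qed
  have dt: "delta c \<in> csimp \<tau>" by (rule delta_csimp) (auto simp: \<tau>_def finp)
  have Fd: "F j (delta c) = real_of_int e" using F_delta[OF c(1)] cc by simp
  define S where "S = comb p q ` {0..1} \<union> comb q (delta c) ` {0..1}"
  have "connected S" unfolding S_def
  proof (rule connected_Un[OF seg_conn seg_conn])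
    have "q = comb p q 1" "q = comb q (delta c) 0" by auto
    then show "comb p q ` {0..1} \<inter> comb q (delta c) ` {0..1} \<noteq> {}" by (metis IntI atLeastAtMost_iff empty_iff image_eqI order_refl zero_le_one)
  qed
  moreover have "p \<in> S" unfolding S_def using comb_0[of p q] by (metis UnI1 atLeastAtMost_iff image_eqI order_refl zero_le_one)
  moreover have "delta c \<in> S" unfolding S_def using comb_1[of q "delta c"] by (metis UnI2 atLeastAtMost_iff image_eqI order_refl zero_le_one)
  moreover have "S \<subseteq> {p \<in> realize CB3. real_of_int e * F j p > 0}"
  proof
    fix y assume "y \<in> S"
    then consider t where "t \<in> {0..1}" "y = comb p q t" | t where "t \<in> {0..1}" "y = comb q (delta c) t"
      unfolding S_def by blast
    then show "y \<in> {p \<in> realize CB3. real_of_int e * F j p > 0}"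
    proof cases
      case 1
      have "y \<in> realize CB3" using 1 csimp_comb[OF p qs] s by (auto intro: realizeI)
      moreover have "real_of_int e * F j y = (1 - t) * (real_of_int e * F j p) + t * (real_of_int e * real_of_int e)"
        using 1 Fq by (simp add: F_comb algebra_simps)
      moreover have "real_of_int e * real_of_int e = 1" using ee by (metis of_int_1 of_int_mult)
      moreover have "(1 - t) * (real_of_int e * F j p) + t * 1 > 0"
      proof (cases "t = 0")
        case True then show ?thesis using pos by simp
      next
        case False then have "t > 0" using 1 by auto
        moreover have "(1 - t) * (real_of_int e * F j p) \<ge> 0" using 1 pos by auto
        ultimately show ?thesis by linarith
      qed
      ultimately show ?thesis by simp
    next
      case 2
      have "y \<in> realize CB3" using 2 csimp_comb[OF qt dt] tc by (auto intro: realizeI)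
      moreover have "real_of_int e * F j y = real_of_int e * real_of_int e"
        using 2 Fq Fd by (simp add: F_comb algebra_simps)
      moreover have "real_of_int e * real_of_int e = 1" using ee by (metis of_int_1 of_int_mult)
      ultimately show ?thesis by simp
    qed
  qed
  ultimately show ?thesis unfolding c_def by blast
qed

lemma comp_U:
  assumes j: "j \<in> {1,2,3}" and r: "\<forall>q. act r q = flip j q"
    and x: "x \<in> realize CB3 - realize (fixcplx r)"
  shows "\<exists>e\<in>{1,-1::int}. {\<sigma>\<in>CB3. csimp \<sigma> \<subseteq> connected_component_set (realize CB3 - realize (fixcplx r)) x}
      = {\<sigma>\<in>CB3. \<forall>v\<in>\<sigma>. cmp j (pt v) = e}"
proof -
  define X where "X = realize CB3 - realize (fixcplx r)"
  define C where "C = connected_component_set X x"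
  have nz: "\<And>p. p \<in> X \<Longrightarrow> F j p \<noteq> 0" using off_wall[OF j r] by (auto simp: X_def)
  define e :: int where "e = (if F j x > 0 then 1 else -1)"
  have e: "e \<in> {1,-1}" by (simp add: e_def)
  have xX: "x \<in> X" using x by (simp add: X_def)
  have ex: "real_of_int e * F j x > 0" using nz[OF xX] by (auto simp: e_def)
  have CX: "C \<subseteq> X" by (simp add: C_def connected_component_subset)
  have xC: "x \<in> C" using xX by (simp add: C_def)
  have a: "\<forall>p\<in>C. real_of_int e * F j p > 0"
  proof (rule ccontr)
    assume "\<not> ?thesis"
    then obtain p where p: "p \<in> C" "real_of_int e * F j p \<le> 0" by force
    have "F j p \<noteq> 0" using nz p CX by blast
    then have pn: "real_of_int e * F j p < 0" using p e by (auto simp: order.order_iff_strict)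
    have conn: "connected (F j ` C)"
      using connected_continuous_image[OF F_cont connected_connected_component] by (simp add: C_def)
    have "0 \<in> F j ` C"
    proof (cases "e = 1")
      case True
      then have "F j p \<le> 0" "0 \<le> F j x" using pn ex by auto
      then show ?thesis using conn p(1) xC unfolding connected_iff_interval by blast
    next
      case False
      then have "e = -1" using e by auto
      then have "F j x \<le> 0" "0 \<le> F j p" using pn ex by auto
      then show ?thesis using conn p(1) xC unfolding connected_iff_interval by blast
    qed
    then show False using nz CX by force
  qed
  define P where "P = {p \<in> realize CB3. real_of_int e * F j p > 0}"
  define c where "c = (S1, Cset S1 (ej j e))"
  have PX: "P \<subseteq> X"
  proof
    fix p assume "p \<in> P"
    then have "p \<in> realize CB3" "F j p \<noteq> 0" by (auto simp: P_def)
    then show "p \<in> X" using on_wall[OF j r] by (auto simp: X_def)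
  qed
  have xP: "x \<in> P" using x ex by (simp add: P_def)
  have Pconn: "connected P"
  proof -
    let ?SS = "{S. connected S \<and> delta c \<in> S \<and> S \<subseteq> P}"
    have "P = \<Union>?SS"
    proof
      show "P \<subseteq> \<Union>?SS"
      proof
        fix p assume "p \<in> P"
        then obtain \<sigma> where "\<sigma> \<in> CB3" "p \<in> csimp \<sigma>" "real_of_int e * F j p > 0"
          by (auto simp: P_def realize_def)
        from star_piece[OF j e this] show "p \<in> \<Union>?SS" by (auto simp: c_def P_def)
      qed
    qed auto
    moreover have "connected (\<Union>?SS)" by (rule connected_Union) auto
    ultimately show ?thesis by simp
  qed
  have PC: "P \<subseteq> C" unfolding C_def by (rule connected_component_maximal[OF xP Pconn PX])
  have "{\<sigma>\<in>CB3. csimp \<sigma> \<subseteq> C} = {\<sigma>\<in>CB3. \<forall>v\<in>\<sigma>. cmp j (pt v) = e}"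
  proof (rule set_eqI, rule iffI)
    fix \<sigma> assume "\<sigma> \<in> {\<sigma>\<in>CB3. csimp \<sigma> \<subseteq> C}"
    then have s: "\<sigma> \<in> CB3" "csimp \<sigma> \<subseteq> C" by auto
    have "\<forall>v\<in>\<sigma>. cmp j (pt v) = e"
    proof
      fix v assume v: "v \<in> \<sigma>"
      have vv: "v \<in> verts True" using CB3_sub[OF s(1)] v by auto
      have "delta v \<in> C" using s(2) delta_csimp[OF _ v] CB3_sub[OF s(1)] by auto
      then have "real_of_int e * real_of_int (cmp j (pt v)) > 0" using a F_delta[OF vv] by auto
      then have "e * cmp j (pt v) > 0" by (metis of_int_0_less_iff of_int_mult)
      then show "cmp j (pt v) = e" using vals[OF vv j] e by auto
    qed
    then show "\<sigma> \<in> {\<sigma>\<in>CB3. \<forall>v\<in>\<sigma>. cmp j (pt v) = e}" using s by auto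
  next
    fix \<sigma> assume "\<sigma> \<in> {\<sigma>\<in>CB3. \<forall>v\<in>\<sigma>. cmp j (pt v) = e}"
    then have s: "\<sigma> \<in> CB3" "\<forall>v\<in>\<sigma>. cmp j (pt v) = e" by auto
    have "csimp \<sigma> \<subseteq> P"
    proof
      fix p assume p: "p \<in> csimp \<sigma>"
      have "F j p = (\<Sum>v\<in>\<sigma>. p v * real_of_int e)" using F_csimp[OF _ p] CB3_sub[OF s(1)] s(2) by simp
      also have "\<dots> = real_of_int e" using p by (simp add: csimp_def sum_distrib_right[symmetric])
      finally have "real_of_int e * F j p = real_of_int (e * e)" by simp
      moreover have "e * e = 1" using e by auto
      ultimately show "p \<in> P" using p s(1) by (auto simp: P_def intro: realizeI)
    qed
    then show "\<sigma> \<in> {\<sigma>\<in>CB3. csimp \<sigma> \<subseteq> C}" using s PC by auto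
  qed
  then show ?thesis using e unfolding C_def X_def by blast
qed

lemma falk_U: "falk_s3 D' \<Longrightarrow> \<exists>j e. j \<in> {1,2,3} \<and> e \<in> {1,-1::int} \<and> is_lift D' {\<sigma>\<in>CB3. \<forall>v\<in>\<sigma>. cmp j (pt v) = e}"
proof -
  assume "falk_s3 D'"
  then obtain r x U where r: "is_reflection_conj_s3 r" and x: "x \<in> realize CB3 - realize (fixcplx r)"
    and U: "U = {\<sigma>\<in>CB3. csimp \<sigma> \<subseteq> connected_component_set (realize CB3 - realize (fixcplx r)) x}"
    and l: "is_lift D' U" unfolding falk_s3_def by blast
  obtain j where j: "j \<in> {1,2,3}" "\<forall>q. act r q = flip j q" using refl_flip[OF r] by blast
  obtain e where "e \<in> {1,-1::int}" "U = {\<sigma>\<in>CB3. \<forall>v\<in>\<sigma>. cmp j (pt v) = e}"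
    using comp_U[OF j x] U by blast
  then show ?thesis using j l by blast
qed

definition grid :: "(int \<times> int) set" where "grid = {-1,0,1} \<times> {-1,0,1}"
definition tyof :: "int \<times> int \<Rightarrow> gen" where
  "tyof g = (if g = (0,0) then S1 else if fst g = 0 \<or> snd g = 0 then S2 else S3)"
definition pats :: "((int \<times> int) \<times> (int \<times> int)) list" where
  "pats = [((1,0),(0,1)),((1,0),(0,-1)),((-1,0),(0,1)),((-1,0),(0,-1)),((0,1),(1,0)),((0,1),(-1,0)),((0,-1),(1,0)),((0,-1),(-1,0))]"
definition padd :: "int \<times> int \<Rightarrow> int \<times> int \<Rightarrow> int \<times> int" where
  "padd x y = (fst x + fst y, snd x + snd y)"
definition chamber :: "(int \<times> int) \<times> (int \<times> int) \<Rightarrow> (int \<times> int) set" where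
  "chamber mm = {(0,0), fst mm, padd (fst mm) (snd mm)}"
definition cp :: "int \<times> int \<Rightarrow> complex" where
  "cp g = Complex (of_int (fst g)) (of_int (snd g))"

definition tent :: "int \<times> int \<Rightarrow> complex \<Rightarrow> real" where
  "tent g z = (if g = (0,0) then 1 - max \<bar>Re z\<bar> \<bar>Im z\<bar>
     else if snd g = 0 then max 0 (of_int (fst g) * Re z - \<bar>Im z\<bar>)
     else if fst g = 0 then max 0 (of_int (snd g) * Im z - \<bar>Re z\<bar>)
     else max 0 (min (of_int (fst g) * Re z) (of_int (snd g) * Im z)))"

lemma comb_cp: "complex_of_real a * cp g + complex_of_real b * cp g' =
   Complex (a * of_int (fst g) + b * of_int (fst g')) (a * of_int (snd g) + b * of_int (snd g'))"
  by (simp add: cp_def complex_eq_iff)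

lemma tent_chamber:
  assumes mm: "mm \<in> set pats" and g: "g \<in> grid" and b: "0 \<le> b" "b \<le> a" "a \<le> 1"
  shows "tent g (complex_of_real a * cp (fst mm) + complex_of_real b * cp (snd mm)) =
    (if g = (0,0) then 1 - a else if g = fst mm then a - b else if g = padd (fst mm) (snd mm) then b else 0)"
proof -
  have ab: "\<bar>a\<bar> = a" "\<bar>b\<bar> = b" "max a b = a" "max b a = a" "min a b = b" "min b a = b" using b by auto
  from g have g': "g \<in> {(-1,-1),(-1,0),(-1,1),(0,-1),(0,0),(0,1),(1,-1),(1,0),(1,1)}" by (auto simp: grid_def)
  from mm have mm': "mm \<in> {((1,0),(0,1)),((1,0),(0,-1)),((-1,0),(0,1)),((-1,0),(0,-1)),((0,1),(1,0)),((0,1),(-1,0)),((0,-1),(1,0)),((0,-1),(-1,0))}"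
    by (simp add: pats_def)
  show ?thesis unfolding comb_cp
    using mm' g' apply (simp only: insert_iff empty_iff)
    apply (elim disjE)
    apply (simp_all add: tent_def padd_def ab)
    apply (simp_all add: max_def min_def)
    using b by (safe; linarith)+
qed

lemma pats_cases: "mm \<in> set pats \<Longrightarrow> mm = ((1,0),(0,1)) \<or> mm = ((1,0),(0,-1)) \<or> mm = ((-1,0),(0,1)) \<or> mm = ((-1,0),(0,-1)) \<or> mm = ((0,1),(1,0)) \<or> mm = ((0,1),(-1,0)) \<or> mm = ((0,-1),(1,0)) \<or> mm = ((0,-1),(-1,0))"
  by (simp add: pats_def)

lemma pats_facts:
  assumes "mm \<in> set pats"
  shows "fst mm \<noteq> (0,0)" "padd (fst mm) (snd mm) \<noteq> (0,0)" "fst mm \<noteq> padd (fst mm) (snd mm)"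
    "fst mm \<in> grid" "padd (fst mm) (snd mm) \<in> grid" "(0,0) \<in> grid"
    "tyof (fst mm) = S2" "tyof (padd (fst mm) (snd mm)) = S3"
    "cp (padd (fst mm) (snd mm)) = cp (fst mm) + cp (snd mm)"
    "cmod (complex_of_real x * cp (fst mm) + complex_of_real y * cp (snd mm)) = cmod (Complex (-x) y)"
  using pats_cases[OF assms] unfolding comb_cp
  by (elim disjE; simp add: padd_def grid_def tyof_def cp_def complex_eq_iff complex_norm)+

lemma cp0[simp]: "cp (0,0) = 0" by (simp add: cp_def complex_eq_iff)

lemma chamber_grid: "mm \<in> set pats \<Longrightarrow> chamber mm \<subseteq> grid"
  using pats_facts by (auto simp: chamber_def)

definition Sq :: "complex set" where "Sq = {z. \<bar>Re z\<bar> \<le> 1 \<and> \<bar>Im z\<bar> \<le> 1}"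

locale core =
  fixes K :: "vertex set set" and pos :: "vertex \<Rightarrow> int \<times> int"
  assumes hfin: "finite (\<Union>K)"
    and hinj: "inj_on pos (\<Union>K)"
    and himg: "pos ` (\<Union>K) = grid"
    and htyp: "\<forall>v\<in>\<Union>K. fst v = tyof (pos v)"
    and K_iff: "\<And>\<sigma>. \<sigma> \<in> K \<longleftrightarrow> \<sigma> \<noteq> {} \<and> \<sigma> \<subseteq> \<Union>K \<and> (\<exists>mm\<in>set pats. pos ` \<sigma> \<subseteq> chamber mm)"
begin

definition Phi :: "(vertex \<Rightarrow> real) \<Rightarrow> complex" where
  "Phi p = (\<Sum>v\<in>\<Union>K. complex_of_real (p v) * cp (pos v))"

definition psi :: "complex \<Rightarrow> vertex \<Rightarrow> real" where
  "psi z = (\<lambda>v. if v \<in> \<Union>K then tent (pos v) z else 0)"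

definition vat :: "int \<times> int \<Rightarrow> vertex" where "vat g = inv_into (\<Union>K) pos g"

lemma vat: "g \<in> grid \<Longrightarrow> vat g \<in> \<Union>K \<and> pos (vat g) = g"
  unfolding vat_def using himg by (metis f_inv_into_f inv_into_into)

lemma vat_pos: "v \<in> \<Union>K \<Longrightarrow> vat (pos v) = v"
  unfolding vat_def using hinj by (simp add: inv_into_f_f)

definition sz :: "(int \<times> int) \<times> (int \<times> int) \<Rightarrow> vertex set" where
  "sz mm = {v\<in>\<Union>K. pos v \<in> chamber mm}"

lemma sz_vat: "mm \<in> set pats \<Longrightarrow> sz mm = vat ` chamber mm"
proof -
  assume mm: "mm \<in> set pats"
  show ?thesis
  proof
    show "sz mm \<subseteq> vat ` chamber mm"
    proof
      fix v assume "v \<in> sz mm"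
      then have "v \<in> \<Union>K" "pos v \<in> chamber mm" by (auto simp: sz_def)
      then show "v \<in> vat ` chamber mm" using vat_pos by (metis image_eqI)
    qed
    show "vat ` chamber mm \<subseteq> sz mm"
    proof
      fix v assume "v \<in> vat ` chamber mm"
      then obtain g where g: "g \<in> chamber mm" "v = vat g" by blast
      then have "g \<in> grid" using chamber_grid[OF mm] by blast
      then show "v \<in> sz mm" using vat[of g] g by (simp add: sz_def)
    qed
  qed
qed

lemma sum_sz:
  assumes mm: "mm \<in> set pats"
  shows "(\<Sum>v\<in>sz mm. h v) = h (vat (0,0)) + h (vat (fst mm)) + h (vat (padd (fst mm) (snd mm)))"
proof -
  have io: "inj_on vat (chamber mm)"
  proof (rule inj_on_inverseI[where g=pos])
    fix g assume "g \<in> chamber mm"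
    then have "g \<in> grid" using chamber_grid[OF mm] by blast
    then show "pos (vat g) = g" using vat by blast
  qed
  have "(\<Sum>v\<in>sz mm. h v) = (\<Sum>g\<in>chamber mm. h (vat g))"
    unfolding sz_vat[OF mm] by (rule sum.reindex[OF io, unfolded comp_def])
  also have "\<dots> = h (vat (0,0)) + h (vat (fst mm)) + h (vat (padd (fst mm) (snd mm)))"
  proof -
    have d: "(0,0) \<noteq> fst mm" "(0,0) \<noteq> padd (fst mm) (snd mm)" "fst mm \<noteq> padd (fst mm) (snd mm)"
      using pats_facts[OF mm] by auto
    show ?thesis unfolding chamber_def using d by (simp add: add.assoc)
  qed
  finally show ?thesis .
qed

lemma sz_in_K: "mm \<in> set pats \<Longrightarrow> sz mm \<in> K"
proof -
  assume mm: "mm \<in> set pats"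
  have "(0::int,0::int) \<in> grid" by (simp add: grid_def)
  then have "vat (0,0) \<in> sz mm" using vat[of "(0,0)"] by (simp add: sz_def chamber_def)
  then have "sz mm \<noteq> {}" by blast
  moreover have "sz mm \<subseteq> \<Union>K" by (auto simp: sz_def)
  moreover have "pos ` sz mm \<subseteq> chamber mm" by (auto simp: sz_def)
  ultimately show ?thesis using K_iff mm by blast
qed

definition frm :: "(int \<times> int) \<times> (int \<times> int) \<Rightarrow> real \<Rightarrow> real \<Rightarrow> int \<times> int \<Rightarrow> real" where
  "frm mm a b g = (if g = (0,0) then 1 - a else if g = fst mm then a - b else if g = padd (fst mm) (snd mm) then b else 0)"

lemma psi_sector:
  assumes mm: "mm \<in> set pats" and ab: "0 \<le> b" "b \<le> a" "a \<le> 1"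
  defines "z \<equiv> complex_of_real a * cp (fst mm) + complex_of_real b * cp (snd mm)"
  shows "psi z = (\<lambda>v. if v \<in> \<Union>K then frm mm a b (pos v) else 0)"
    "psi z \<in> csimp (sz mm)" "Phi (psi z) = z"
proof -
  show ps: "psi z = (\<lambda>v. if v \<in> \<Union>K then frm mm a b (pos v) else 0)"
  proof (rule ext)
    fix v show "psi z v = (if v \<in> \<Union>K then frm mm a b (pos v) else 0)"
    proof (cases "v \<in> \<Union>K")
      case True
      then have "pos v \<in> grid" using himg by blast
      then show ?thesis using tent_chamber[OF mm _ ab] True by (simp add: psi_def z_def frm_def)
    qed (simp add: psi_def)
  qed
  have pf: "(0,0) \<noteq> fst mm" "(0,0) \<noteq> padd (fst mm) (snd mm)" "fst mm \<noteq> padd (fst mm) (snd mm)"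
    using pats_facts[OF mm] by auto
  have vz: "vat (0,0) \<in> \<Union>K" "pos (vat (0,0)) = (0,0)" using vat[of "(0,0)"] by (auto simp: grid_def)
  have vm: "vat (fst mm) \<in> \<Union>K" "pos (vat (fst mm)) = fst mm" using vat pats_facts[OF mm] by auto
  have vq: "vat (padd (fst mm) (snd mm)) \<in> \<Union>K" "pos (vat (padd (fst mm) (snd mm))) = padd (fst mm) (snd mm)"
    using vat pats_facts[OF mm] by auto
  have "sum (psi z) (sz mm) = (1 - a) + (a - b) + b"
    unfolding sum_sz[OF mm] using vz vm vq pf by (simp add: ps frm_def)
  then have s1: "sum (psi z) (sz mm) = 1" by simp
  have "\<forall>v. v \<notin> sz mm \<longrightarrow> psi z v = 0"
    using ps by (auto simp: sz_def frm_def chamber_def)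
  moreover have "\<forall>v\<in>sz mm. 0 \<le> psi z v" using ps ab by (auto simp: frm_def)
  ultimately show "psi z \<in> csimp (sz mm)" using s1 by (simp add: csimp_def)
  have "Phi (psi z) = (\<Sum>v\<in>sz mm. complex_of_real (psi z v) * cp (pos v))"
    unfolding Phi_def by (rule sum.mono_neutral_right[OF hfin]) (auto simp: sz_def ps frm_def chamber_def)
  also have "\<dots> = complex_of_real (a - b) * cp (fst mm) + complex_of_real b * (cp (fst mm) + cp (snd mm))"
    unfolding sum_sz[OF mm] using vz vm vq pf pats_facts[OF mm] by (simp add: ps frm_def)
  also have "\<dots> = z" unfolding z_def by (simp add: algebra_simps)
  finally show "Phi (psi z) = z" .
qed

end

lemma sector_Sq: assumes "mm \<in> set pats" "0 \<le> b" "b \<le> a" "a \<le> 1" shows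
   "complex_of_real a * cp (fst mm) + complex_of_real b * cp (snd mm) \<in> Sq"
  unfolding comb_cp Sq_def using pats_cases[OF assms(1)] assms(2-4) by (elim disjE) auto

lemma corner_ty: "mm \<in> set pats \<Longrightarrow> corner (tyof (0,0)) = 1 \<and> corner (tyof (fst mm)) = 0 \<and> corner (tyof (padd (fst mm) (snd mm))) = \<i>"
  using pats_facts by (simp add: tyof_def)

context core begin

lemma csimp_K:
  assumes s: "\<sigma> \<in> K" and p: "p \<in> csimp \<sigma>"
  shows "\<sigma> \<subseteq> \<Union>K" "\<forall>v. v \<notin> \<sigma> \<longrightarrow> p v = 0" "\<forall>v\<in>\<sigma>. 0 \<le> p v" "sum p \<sigma> = 1" "finite \<sigma>"
  using s p hfin by (auto simp: csimp_def intro: finite_subset)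

lemma coords:
  assumes s: "\<sigma> \<in> K" and p: "p \<in> csimp \<sigma>" and mm: "mm \<in> set pats" and sub: "pos ` \<sigma> \<subseteq> chamber mm"
  defines "a \<equiv> p (vat (fst mm)) + p (vat (padd (fst mm) (snd mm)))"
    and "b \<equiv> p (vat (padd (fst mm) (snd mm)))"
  shows "0 \<le> b" "b \<le> a" "a \<le> 1"
    "p = (\<lambda>v. if v \<in> \<Union>K then frm mm a b (pos v) else 0)"
    "Phi p = complex_of_real a * cp (fst mm) + complex_of_real b * cp (snd mm)"
    "opos p = Complex (1 - a) b"
proof -
  note ck = csimp_K[OF s p]
  have ssz: "\<sigma> \<subseteq> sz mm" using ck(1) sub by (auto simp: sz_def)
  have finsz: "finite (sz mm)" using hfin by (auto simp: sz_def intro: finite_subset)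
  have z0: "\<forall>v. v \<notin> sz mm \<longrightarrow> p v = 0" using ck(2) ssz by auto
  have nn: "\<forall>v. 0 \<le> p v" using ck(2) ck(3) by (metis order_refl)
  have "sum p (sz mm) = sum p \<sigma>"
    by (rule sum.mono_neutral_right[OF finsz ssz]) (use ck(2) in auto)
  then have s1: "p (vat (0,0)) + p (vat (fst mm)) + p (vat (padd (fst mm) (snd mm))) = 1"
    using ck(4) sum_sz[OF mm, of p] by simp
  have n3: "0 \<le> p (vat (0,0))" "0 \<le> p (vat (fst mm))" "0 \<le> p (vat (padd (fst mm) (snd mm)))" using nn by blast+
  show "0 \<le> b" "b \<le> a" "a \<le> 1" unfolding a_def b_def using n3 s1 by linarith+
  have pf: "(0,0) \<noteq> fst mm" "(0,0) \<noteq> padd (fst mm) (snd mm)" "fst mm \<noteq> padd (fst mm) (snd mm)"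
    using pats_facts[OF mm] by auto
  show pe: "p = (\<lambda>v. if v \<in> \<Union>K then frm mm a b (pos v) else 0)"
  proof (rule ext)
    fix v show "p v = (if v \<in> \<Union>K then frm mm a b (pos v) else 0)"
    proof (cases "v \<in> \<Union>K")
      case True
      then have vv: "vat (pos v) = v" by (rule vat_pos)
      show ?thesis
      proof (cases "pos v \<in> chamber mm")
        case True
        then consider "pos v = (0,0)" | "pos v = fst mm" | "pos v = padd (fst mm) (snd mm)"
          by (auto simp: chamber_def)
        then show ?thesis
        proof cases
          case 1 then show ?thesis using vv \<open>v \<in> \<Union>K\<close> s1 by (auto simp: frm_def a_def b_def)
        next
          case 2 then show ?thesis using vv \<open>v \<in> \<Union>K\<close> pf by (auto simp: frm_def a_def b_def)
        next
          case 3 then show ?thesis using vv \<open>v \<in> \<Union>K\<close> pf by (auto simp: frm_def a_def b_def)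
        qed
      next
        case False
        then have "v \<notin> sz mm" by (simp add: sz_def)
        then have "p v = 0" using z0 by blast
        moreover have "frm mm a b (pos v) = 0" using False by (auto simp: frm_def chamber_def)
        ultimately show ?thesis using True by simp
      qed
    next
      case False
      then have "v \<notin> sz mm" by (simp add: sz_def)
      then have "p v = 0" using z0 by blast
      then show ?thesis using False by simp
    qed
  qed
  have "Phi p = (\<Sum>v\<in>sz mm. complex_of_real (p v) * cp (pos v))"
    unfolding Phi_def by (rule sum.mono_neutral_right[OF hfin]) (use z0 in \<open>auto simp: sz_def\<close>)
  also have "\<dots> = complex_of_real (p (vat (fst mm))) * cp (fst mm) + complex_of_real (p (vat (padd (fst mm) (snd mm)))) * (cp (fst mm) + cp (snd mm))"
    unfolding sum_sz[OF mm] using vat pats_facts[OF mm] by simp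
  also have "\<dots> = complex_of_real a * cp (fst mm) + complex_of_real b * cp (snd mm)"
    unfolding a_def b_def by (simp add: algebra_simps)
  finally show "Phi p = complex_of_real a * cp (fst mm) + complex_of_real b * cp (snd mm)" .
  have sup: "{v. p v \<noteq> 0} \<subseteq> sz mm" using z0 by auto
  have "opos p = (\<Sum>v\<in>sz mm. complex_of_real (p v) * corner (fst v))"
    unfolding opos_def by (rule sum.mono_neutral_left[OF finsz sup]) auto
  also have "\<dots> = (\<Sum>v\<in>sz mm. complex_of_real (p v) * corner (tyof (pos v)))"
  proof (rule sum.cong)
    fix v assume "v \<in> sz mm"
    then have "v \<in> \<Union>K" by (simp add: sz_def)
    then have "fst v = tyof (pos v)" using htyp by blast
    then show "complex_of_real (p v) * corner (fst v) = complex_of_real (p v) * corner (tyof (pos v))" by simp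
  qed simp
  also have "\<dots> = complex_of_real (p (vat (0,0))) + complex_of_real (p (vat (padd (fst mm) (snd mm)))) * \<i>"
    unfolding sum_sz[OF mm] using vat[of "(0,0)"] vat pats_facts[OF mm] corner_ty[OF mm] by (simp add: grid_def)
  also have "\<dots> = Complex (1 - a) b" using s1 unfolding a_def b_def by (simp add: complex_eq_iff)
  finally show "opos p = Complex (1 - a) b" .
qed

lemma simplex_chamber: "\<sigma> \<in> K \<Longrightarrow> \<exists>mm\<in>set pats. pos ` \<sigma> \<subseteq> chamber mm"
  using K_iff by blast

lemma psi_Phi: "p \<in> realize K \<Longrightarrow> psi (Phi p) = p"
proof -
  assume "p \<in> realize K"
  then obtain \<sigma> where s: "\<sigma> \<in> K" "p \<in> csimp \<sigma>" by (auto simp: realize_def)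
  obtain mm where mm: "mm \<in> set pats" "pos ` \<sigma> \<subseteq> chamber mm" using simplex_chamber[OF s(1)] by blast
  note c = coords[OF s mm]
  show ?thesis using psi_sector(1)[OF mm(1) c(1-3)] c(4,5) by simp
qed

lemma Phi_Sq: "p \<in> realize K \<Longrightarrow> Phi p \<in> Sq"
proof -
  assume "p \<in> realize K"
  then obtain \<sigma> where s: "\<sigma> \<in> K" "p \<in> csimp \<sigma>" by (auto simp: realize_def)
  obtain mm where mm: "mm \<in> set pats" "pos ` \<sigma> \<subseteq> chamber mm" using simplex_chamber[OF s(1)] by blast
  note c = coords[OF s mm]
  show ?thesis using sector_Sq[OF mm(1) c(1-3)] c(5) by simp
qed

lemma M1:
  assumes s: "\<sigma> \<in> K" and p: "p \<in> csimp \<sigma>" and q: "q \<in> csimp \<sigma>"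
  shows "cmod (opos p - opos q) = cmod (Phi p - Phi q)"
proof -
  obtain mm where mm: "mm \<in> set pats" "pos ` \<sigma> \<subseteq> chamber mm" using simplex_chamber[OF s] by blast
  note c = coords[OF s p mm] and d = coords[OF s q mm]
  define a where "a = p (vat (fst mm)) + p (vat (padd (fst mm) (snd mm)))"
  define b where "b = p (vat (padd (fst mm) (snd mm)))"
  define a' where "a' = q (vat (fst mm)) + q (vat (padd (fst mm) (snd mm)))"
  define b' where "b' = q (vat (padd (fst mm) (snd mm)))"
  have e: "Phi p - Phi q = complex_of_real (a - a') * cp (fst mm) + complex_of_real (b - b') * cp (snd mm)"
    using c(5) d(5) unfolding a_def b_def a'_def b'_def by (simp add: algebra_simps)
  have "cmod (Phi p - Phi q) = cmod (Complex (-(a - a')) (b - b'))" unfolding e by (rule pats_facts(10)[OF mm(1)])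
  moreover have "opos p - opos q = Complex (-(a - a')) (b - b')"
    using c(6) d(6) unfolding a_def b_def a'_def b'_def by (simp add: complex_eq_iff)
  ultimately show ?thesis by simp
qed

end

definition ip :: "complex \<Rightarrow> complex \<Rightarrow> real" where "ip z u = Re z * Re u + Im z * Im u"

definition reg :: "complex list \<Rightarrow> complex set" where "reg L = {z\<in>Sq. \<forall>u\<in>set L. 0 \<le> ip z u}"

lemma ip_lin: "ip (x + y) u = ip x u + ip y u" "ip (x - y) u = ip x u - ip y u"
  "ip (complex_of_real t * x) u = t * ip x u" "ip z (-u) = - ip z u"
  by (auto simp: ip_def algebra_simps)

lemma zip_cons_self: "A \<noteq> [] \<Longrightarrow> zip (x # A) A = (x, hd A) # zip A (tl A)"
  by (cases A) auto

lemma zip_append_tl: "xs \<noteq> [] \<Longrightarrow> ys \<noteq> [] \<Longrightarrow> last xs = hd ys \<Longrightarrow>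
  zip (xs @ tl ys) (tl (xs @ tl ys)) = zip xs (tl xs) @ zip ys (tl ys)"
proof (induct xs)
  case Nil then show ?case by simp
next
  case (Cons x xs)
  show ?case
  proof (cases "xs = []")
    case True
    then have "[x] @ tl ys = ys" using Cons by (cases ys) auto
    then show ?thesis using True by simp
  next
    case False
    have "zip ((x # xs) @ tl ys) (tl ((x # xs) @ tl ys)) = zip (x # (xs @ tl ys)) (xs @ tl ys)" by simp
    also have "\<dots> = (x, hd xs) # zip (xs @ tl ys) (tl (xs @ tl ys))" using False by (simp add: zip_cons_self)
    also have "\<dots> = (x, hd xs) # zip xs (tl xs) @ zip ys (tl ys)" using Cons False by simp
    also have "\<dots> = zip (x # xs) (tl (x # xs)) @ zip ys (tl ys)" using False by (simp add: zip_cons_self)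
    finally show ?thesis .
  qed
qed

lemma conv_abs: "0 \<le> t \<Longrightarrow> t \<le> 1 \<Longrightarrow> \<bar>x\<bar> \<le> 1 \<Longrightarrow> \<bar>y\<bar> \<le> (1::real) \<Longrightarrow> \<bar>(1 - t) * x + t * y\<bar> \<le> 1"
proof -
  assume t: "0 \<le> t" "t \<le> 1" and xy: "\<bar>x\<bar> \<le> 1" "\<bar>y\<bar> \<le> 1"
  have "(1 - t) * x \<le> (1 - t) * 1" "t * y \<le> t * 1" "(1 - t) * (-1) \<le> (1 - t) * x" "t * (-1) \<le> t * y"
    using t xy by (intro mult_left_mono; auto)+
  then show ?thesis by (simp add: abs_le_iff)
qed

context core begin

definition good :: "complex \<Rightarrow> complex \<Rightarrow> bool" where
  "good a b \<longleftrightarrow> (\<exists>xs. string_ok K xs \<and> hd xs = psi a \<and> last xs = psi b \<and> string_len xs \<le> cmod (a - b))"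

lemma good_trans:
  assumes g1: "good a z" and g2: "good z b" and d: "cmod (a - z) + cmod (z - b) = cmod (a - b)"
  shows "good a b"
proof -
  obtain xs where x: "string_ok K xs" "hd xs = psi a" "last xs = psi z" "string_len xs \<le> cmod (a - z)"
    using g1 by (auto simp: good_def)
  obtain ys where y: "string_ok K ys" "hd ys = psi z" "last ys = psi b" "string_len ys \<le> cmod (z - b)"
    using g2 by (auto simp: good_def)
  have ne: "xs \<noteq> []" "ys \<noteq> []" using x(1) y(1) by (auto simp: string_ok_def)
  have lh: "last xs = hd ys" using x(3) y(2) by simp
  note z = zip_append_tl[OF ne lh]
  have "string_ok K (xs @ tl ys)" using x(1) y(1) ne unfolding string_ok_def z by auto
  moreover have "hd (xs @ tl ys) = psi a" using x(2) ne by simp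
  moreover have "last (xs @ tl ys) = psi b"
  proof (cases "tl ys = []")
    case True
    then have "ys = [hd ys]" using ne by (cases ys) auto
    then have "last ys = hd ys" by (metis last_ConsL)
    then show ?thesis using True lh y(3) by simp
  next
    case False
    then show ?thesis using y(3) ne by (simp add: last_tl)
  qed
  moreover have "string_len (xs @ tl ys) = string_len xs + string_len ys"
    unfolding string_len_def z by simp
  ultimately show ?thesis using x(4) y(4) d unfolding good_def by (metis add_mono)
qed

lemma good_sector:
  assumes mm: "mm \<in> set pats" and ab: "0 \<le> b1" "b1 \<le> a1" "a1 \<le> 1" "0 \<le> b2" "b2 \<le> a2" "a2 \<le> 1"
  shows "good (complex_of_real a1 * cp (fst mm) + complex_of_real b1 * cp (snd mm))
              (complex_of_real a2 * cp (fst mm) + complex_of_real b2 * cp (snd mm))"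
    (is "good ?z ?w")
proof -
  note s1 = psi_sector[OF mm ab(1-3)] and s2 = psi_sector[OF mm ab(4-6)]
  have "string_ok K [psi ?z, psi ?w]" unfolding string_ok_def using s1(2) s2(2) sz_in_K[OF mm] by auto
  moreover have "string_len [psi ?z, psi ?w] = cmod (?z - ?w)"
    unfolding string_len_def using M1[OF sz_in_K[OF mm] s1(2) s2(2)] s1(3) s2(3) by simp
  ultimately show ?thesis unfolding good_def by (metis last.simps list.sel(1) list.distinct(1) order_refl)
qed

end

lemma base_decomp:
  assumes mm: "mm \<in> set pats" and z: "z \<in> Sq" and c1: "0 \<le> ip z (cp (fst mm) - cp (snd mm))" and c2: "0 \<le> ip z (cp (snd mm))"
  shows "\<exists>a b. 0 \<le> b \<and> b \<le> a \<and> a \<le> 1 \<and> z = complex_of_real a * cp (fst mm) + complex_of_real b * cp (snd mm)"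
proof (intro exI conjI)
  have cs: "mm = ((1,0),(0,1)) \<or> mm = ((1,0),(0,-1)) \<or> mm = ((-1,0),(0,1)) \<or> mm = ((-1,0),(0,-1)) \<or> mm = ((0,1),(1,0)) \<or> mm = ((0,1),(-1,0)) \<or> mm = ((0,-1),(1,0)) \<or> mm = ((0,-1),(-1,0))"
    by (rule pats_cases[OF mm])
  have zs: "\<bar>Re z\<bar> \<le> 1" "\<bar>Im z\<bar> \<le> 1" using z by (auto simp: Sq_def)
  show "0 \<le> ip z (cp (snd mm))" by (rule c2)
  show "ip z (cp (snd mm)) \<le> ip z (cp (fst mm))" using c1 by (simp add: ip_def cp_def algebra_simps)
  show "ip z (cp (fst mm)) \<le> 1" using cs zs by (elim disjE) (auto simp: ip_def cp_def)
  show "z = complex_of_real (ip z (cp (fst mm))) * cp (fst mm) + complex_of_real (ip z (cp (snd mm))) * cp (snd mm)"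
    unfolding comb_cp using cs by (elim disjE) (auto simp: ip_def cp_def complex_eq_iff)
qed

context core begin

lemma good_base:
  assumes mm: "mm \<in> set pats" and z: "z \<in> Sq" "0 \<le> ip z (cp (fst mm) - cp (snd mm))" "0 \<le> ip z (cp (snd mm))"
    and w: "w \<in> Sq" "0 \<le> ip w (cp (fst mm) - cp (snd mm))" "0 \<le> ip w (cp (snd mm))"
  shows "good z w"
proof -
  obtain a1 b1 where 1: "0 \<le> b1" "b1 \<le> a1" "a1 \<le> 1" "z = complex_of_real a1 * cp (fst mm) + complex_of_real b1 * cp (snd mm)"
    using base_decomp[OF mm z] by blast
  obtain a2 b2 where 2: "0 \<le> b2" "b2 \<le> a2" "a2 \<le> 1" "w = complex_of_real a2 * cp (fst mm) + complex_of_real b2 * cp (snd mm)"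
    using base_decomp[OF mm w] by blast
  show ?thesis using good_sector[OF mm 1(1-3) 2(1-3)] 1(4) 2(4) by simp
qed

lemma split:
  assumes G1: "\<forall>a\<in>reg (u#L). \<forall>b\<in>reg (u#L). good a b"
    and G2: "\<forall>a\<in>reg ((-u)#L). \<forall>b\<in>reg ((-u)#L). good a b"
    and a: "a \<in> reg L" and b: "b \<in> reg L"
  shows "good a b"
proof -
  have regI: "\<And>z v. z \<in> reg L \<Longrightarrow> 0 \<le> ip z v \<Longrightarrow> z \<in> reg (v#L)" by (auto simp: reg_def)
  consider "0 \<le> ip a u \<and> 0 \<le> ip b u" | "ip a u \<le> 0 \<and> ip b u \<le> 0" | "ip a u > 0 \<and> ip b u < 0" | "ip a u < 0 \<and> ip b u > 0"
    by linarith
  then show ?thesis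
  proof cases
    case 1 then show ?thesis using G1 regI a b by blast
  next
    case 2 then show ?thesis using G2 regI a b by (simp add: ip_lin)
  next
    case 3
    define t where "t = ip a u / (ip a u - ip b u)"
    have D: "ip a u - ip b u > 0" using 3 by linarith
    have t: "0 < t" "t < 1" using 3 D by (auto simp: t_def zero_less_divide_iff divide_less_eq)
    define z where "z = a + complex_of_real t * (b - a)"
    have "ip z u = ip a u + t * (ip b u - ip a u)" by (simp add: z_def ip_lin)
    also have "\<dots> = 0" using D by (simp add: t_def field_simps)
    finally have zu: "ip z u = 0" .
    have zre: "Re z = (1 - t) * Re a + t * Re b" "Im z = (1 - t) * Im a + t * Im b" by (auto simp: z_def algebra_simps)
    have zL: "z \<in> reg L"
    proof -
      have ab: "\<bar>Re a\<bar> \<le> 1" "\<bar>Im a\<bar> \<le> 1" "\<bar>Re b\<bar> \<le> 1" "\<bar>Im b\<bar> \<le> 1" using a b by (auto simp: reg_def Sq_def)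
      have "\<bar>Re z\<bar> \<le> 1" unfolding zre by (rule conv_abs) (use t ab in auto)
      moreover have "\<bar>Im z\<bar> \<le> 1" unfolding zre by (rule conv_abs) (use t ab in auto)
      ultimately have "z \<in> Sq" by (simp add: Sq_def)
      moreover have "\<forall>v\<in>set L. 0 \<le> ip z v"
      proof
        fix v assume v: "v \<in> set L"
        have "ip z v = (1 - t) * ip a v + t * ip b v" by (simp add: ip_def zre algebra_simps)
        moreover have "0 \<le> ip a v" "0 \<le> ip b v" using a b v by (auto simp: reg_def)
        ultimately show "0 \<le> ip z v" using t by simp
      qed
      ultimately show ?thesis by (simp add: reg_def)
    qed
    have d: "cmod (a - z) + cmod (z - b) = cmod (a - b)"
    proof -
      have e1: "a - z = complex_of_real t * (a - b)" by (simp add: z_def algebra_simps)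
      have e2: "z - b = complex_of_real (1 - t) * (a - b)" by (simp add: z_def algebra_simps)
      have n1: "cmod (complex_of_real t) = t" "cmod (complex_of_real (1 - t)) = 1 - t"
        by (simp_all only: norm_of_real) (use t in auto)
      have "cmod (a - z) + cmod (z - b) = t * cmod (a - b) + (1 - t) * cmod (a - b)"
        unfolding e1 e2 norm_mult n1 ..
      then show ?thesis by (simp add: algebra_simps)
    qed
    have "good a z" using G1 regI[OF a] regI[OF zL] 3 zu by simp
    moreover have "good z b" using G2 regI[OF zL] regI[OF b] 3 zu by (simp add: ip_lin)
    ultimately show ?thesis using good_trans d by blast
  next
    case 4
    define t where "t = ip a u / (ip a u - ip b u)"
    have D: "ip a u - ip b u < 0" using 4 by linarith
    have t: "0 < t" "t < 1" using 4 D by (auto simp: t_def zero_less_divide_iff divide_less_eq)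
    define z where "z = a + complex_of_real t * (b - a)"
    have "ip z u = ip a u + t * (ip b u - ip a u)" by (simp add: z_def ip_lin)
    also have "\<dots> = 0" using D by (simp add: t_def field_simps)
    finally have zu: "ip z u = 0" .
    have zre: "Re z = (1 - t) * Re a + t * Re b" "Im z = (1 - t) * Im a + t * Im b" by (auto simp: z_def algebra_simps)
    have zL: "z \<in> reg L"
    proof -
      have ab: "\<bar>Re a\<bar> \<le> 1" "\<bar>Im a\<bar> \<le> 1" "\<bar>Re b\<bar> \<le> 1" "\<bar>Im b\<bar> \<le> 1" using a b by (auto simp: reg_def Sq_def)
      have "\<bar>Re z\<bar> \<le> 1" unfolding zre by (rule conv_abs) (use t ab in auto)
      moreover have "\<bar>Im z\<bar> \<le> 1" unfolding zre by (rule conv_abs) (use t ab in auto)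
      ultimately have "z \<in> Sq" by (simp add: Sq_def)
      moreover have "\<forall>v\<in>set L. 0 \<le> ip z v"
      proof
        fix v assume v: "v \<in> set L"
        have "ip z v = (1 - t) * ip a v + t * ip b v" by (simp add: ip_def zre algebra_simps)
        moreover have "0 \<le> ip a v" "0 \<le> ip b v" using a b v by (auto simp: reg_def)
        ultimately show "0 \<le> ip z v" using t by simp
      qed
      ultimately show ?thesis by (simp add: reg_def)
    qed
    have d: "cmod (a - z) + cmod (z - b) = cmod (a - b)"
    proof -
      have e1: "a - z = complex_of_real t * (a - b)" by (simp add: z_def algebra_simps)
      have e2: "z - b = complex_of_real (1 - t) * (a - b)" by (simp add: z_def algebra_simps)
      have n1: "cmod (complex_of_real t) = t" "cmod (complex_of_real (1 - t)) = 1 - t"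
        by (simp_all only: norm_of_real) (use t in auto)
      have "cmod (a - z) + cmod (z - b) = t * cmod (a - b) + (1 - t) * cmod (a - b)"
        unfolding e1 e2 norm_mult n1 ..
      then show ?thesis by (simp add: algebra_simps)
    qed
    have "good a z" using G2 regI[OF a] regI[OF zL] 4 zu by (simp add: ip_lin)
    moreover have "good z b" using G1 regI[OF zL] regI[OF b] 4 zu by simp
    ultimately show ?thesis using good_trans d by blast
  qed
qed

lemma good_quadrant:
  assumes s: "s1 \<in> {1,-1}" "s2 \<in> {1,-1}"
  shows "\<forall>a\<in>reg [cp (s1,0), cp (0,s2)]. \<forall>b\<in>reg [cp (s1,0), cp (0,s2)]. good a b"
proof (intro ballI)
  fix a b assume a: "a \<in> reg [cp (s1,0), cp (0,s2)]" and b: "b \<in> reg [cp (s1,0), cp (0,s2)]"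
  have m1: "((s1,0),(0,s2)) \<in> set pats" and m2: "((0,s2),(s1,0)) \<in> set pats" using s by (auto simp: pats_def)
  let ?u = "cp (s1,0) - cp (0,s2)"
  show "good a b"
  proof (rule split[OF _ _ a b])
    show "\<forall>a\<in>reg (?u # [cp (s1,0), cp (0,s2)]). \<forall>b\<in>reg (?u # [cp (s1,0), cp (0,s2)]). good a b"
      using good_base[OF m1] by (simp add: reg_def)
    have "-?u = cp (0,s2) - cp (s1,0)" by simp
    then show "\<forall>a\<in>reg ((-?u) # [cp (s1,0), cp (0,s2)]). \<forall>b\<in>reg ((-?u) # [cp (s1,0), cp (0,s2)]). good a b"
      using good_base[OF m2] by (simp add: reg_def)
  qed
qed

lemma cp_neg: "- cp (a,b) = cp (-a,-b)" by (simp add: cp_def complex_eq_iff)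

lemma good_half:
  assumes s: "s2 \<in> {1,-1}"
  shows "\<forall>a\<in>reg [cp (0,s2)]. \<forall>b\<in>reg [cp (0,s2)]. good a b"
proof (intro ballI)
  fix a b assume a: "a \<in> reg [cp (0,s2)]" and b: "b \<in> reg [cp (0,s2)]"
  show "good a b"
  proof (rule split[OF _ _ a b, where u="cp (1,0)"])
    show "\<forall>a\<in>reg (cp (1,0) # [cp (0,s2)]). \<forall>b\<in>reg (cp (1,0) # [cp (0,s2)]). good a b"
      using good_quadrant[of 1 s2] s by simp
    show "\<forall>a\<in>reg ((- cp (1,0)) # [cp (0,s2)]). \<forall>b\<in>reg ((- cp (1,0)) # [cp (0,s2)]). good a b"
      using good_quadrant[of "-1" s2] s by (simp add: cp_neg)
  qed
qed

lemma good_all: "a \<in> Sq \<Longrightarrow> b \<in> Sq \<Longrightarrow> good a b"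
proof -
  assume a: "a \<in> Sq" and b: "b \<in> Sq"
  have r: "reg [] = Sq" by (simp add: reg_def)
  show "good a b"
  proof (rule split[where u="cp (0,1)" and L="[]"])
    show "\<forall>a\<in>reg [cp (0,1)]. \<forall>b\<in>reg [cp (0,1)]. good a b" using good_half[of 1] by simp
    show "\<forall>a\<in>reg [- cp (0,1)]. \<forall>b\<in>reg [- cp (0,1)]. good a b" using good_half[of "-1"] by (simp add: cp_neg)
  qed (use a b r in auto)
qed

lemma len_lower: "string_ok K xs \<Longrightarrow> cmod (Phi (hd xs) - Phi (last xs)) \<le> string_len xs"
proof (induct xs rule: induct_list012)
  case 1 then show ?case by (simp add: string_ok_def)
next
  case (2 x) then show ?case by (simp add: string_len_def)
next
  case (3 x y zs)
  have ok: "string_ok K (y # zs)" using 3(3) by (auto simp: string_ok_def)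
  obtain \<sigma> where s: "\<sigma> \<in> K" "x \<in> csimp \<sigma>" "y \<in> csimp \<sigma>" using 3(3) by (auto simp: string_ok_def)
  have "string_len (x # y # zs) = cmod (opos x - opos y) + string_len (y # zs)" by (simp add: string_len_def)
  also have "cmod (opos x - opos y) = cmod (Phi x - Phi y)" by (rule M1[OF s])
  finally have e: "string_len (x # y # zs) = cmod (Phi x - Phi y) + string_len (y # zs)" .
  have "cmod (Phi x - Phi (last (y # zs))) \<le> cmod (Phi x - Phi y) + cmod (Phi y - Phi (last (y # zs)))"
    using dist_triangle[of "Phi x" "Phi (last (y#zs))" "Phi y"] by (simp add: dist_norm)
  also have "\<dots> \<le> cmod (Phi x - Phi y) + string_len (y # zs)" using 3(2)[OF ok] by simp
  finally show ?case using e by simp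
qed

lemma psi_in: "z \<in> Sq \<Longrightarrow> psi z \<in> realize K \<and> Phi (psi z) = z"
proof -
  assume z: "z \<in> Sq"
  have "\<exists>mm\<in>set pats. 0 \<le> ip z (cp (fst mm) - cp (snd mm)) \<and> 0 \<le> ip z (cp (snd mm))"
  proof -
    have "\<forall>mm\<in>set pats. ip z (cp (fst mm) - cp (snd mm)) < 0 \<or> ip z (cp (snd mm)) < 0 \<Longrightarrow> False"
      by (simp add: pats_def ip_def cp_def) linarith
    then show ?thesis by force
  qed
  then obtain mm where mm: "mm \<in> set pats" "0 \<le> ip z (cp (fst mm) - cp (snd mm))" "0 \<le> ip z (cp (snd mm))" by blast
  obtain a b where ab: "0 \<le> b" "b \<le> a" "a \<le> 1" "z = complex_of_real a * cp (fst mm) + complex_of_real b * cp (snd mm)"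
    using base_decomp[OF mm(1) z mm(2,3)] by blast
  show ?thesis using psi_sector[OF mm(1) ab(1-3)] ab(4) sz_in_K[OF mm(1)] by (auto simp: realize_def)
qed

lemma orth_dist_eq:
  assumes x: "x \<in> realize K" and y: "y \<in> realize K"
  shows "orth_dist K x y = cmod (Phi x - Phi y)"
proof -
  let ?S = "{string_len xs | xs. string_ok K xs \<and> hd xs = x \<and> last xs = y}"
  obtain xs where xs: "string_ok K xs" "hd xs = psi (Phi x)" "last xs = psi (Phi y)" "string_len xs \<le> cmod (Phi x - Phi y)"
    using good_all[OF Phi_Sq[OF x] Phi_Sq[OF y]] by (auto simp: good_def)
  have xs': "hd xs = x" "last xs = y" using xs psi_Phi x y by auto
  have low: "\<And>s. s \<in> ?S \<Longrightarrow> cmod (Phi x - Phi y) \<le> s" using len_lower by fastforce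
  have "string_len xs = cmod (Phi x - Phi y)" using low[of "string_len xs"] xs xs' by force
  then have mem: "cmod (Phi x - Phi y) \<in> ?S" using xs xs' by force
  show ?thesis unfolding orth_dist_def by (rule cInf_eq_minimum[OF mem low])
qed

end

lemma Sq_conv: "A \<in> Sq \<Longrightarrow> B \<in> Sq \<Longrightarrow> 0 \<le> l \<Longrightarrow> l \<le> 1 \<Longrightarrow> A + complex_of_real l * (B - A) \<in> Sq"
proof -
  assume A: "A \<in> Sq" and B: "B \<in> Sq" and l: "0 \<le> l" "l \<le> 1"
  have e: "Re (A + complex_of_real l * (B - A)) = (1 - l) * Re A + l * Re B"
          "Im (A + complex_of_real l * (B - A)) = (1 - l) * Im A + l * Im B" by (auto simp: algebra_simps)
  have ab: "\<bar>Re A\<bar> \<le> 1" "\<bar>Im A\<bar> \<le> 1" "\<bar>Re B\<bar> \<le> 1" "\<bar>Im B\<bar> \<le> 1" using A B by (auto simp: Sq_def)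
  have "\<bar>Re (A + complex_of_real l * (B - A))\<bar> \<le> 1" unfolding e by (rule conv_abs) (use l ab in auto)
  moreover have "\<bar>Im (A + complex_of_real l * (B - A))\<bar> \<le> 1" unfolding e by (rule conv_abs) (use l ab in auto)
  ultimately show ?thesis by (simp add: Sq_def)
qed

lemma seg_point:
  fixes u A B :: complex
  assumes L: "cmod (A - B) = L" and s: "0 \<le> s" "s \<le> L" and uA: "cmod (u - A) = s" and uB: "cmod (u - B) = L - s"
  shows "u = A + complex_of_real (s / L) * (B - A)"
proof (cases "L = 0")
  case True
  then have "u = A" using uA s by simp
  then show ?thesis using True by simp
next
  case False
  then have Lp: "L > 0" using s by linarith
  have "norm ((u - A) + (B - u)) = norm (u - A) + norm (B - u)"
    using L uA uB by (simp add: norm_minus_commute)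
  then have "norm (u - A) *\<^sub>R (B - u) = norm (B - u) *\<^sub>R (u - A)" by (simp only: norm_triangle_eq)
  then have "s *\<^sub>R (B - u) = (L - s) *\<^sub>R (u - A)" using uA uB by (simp add: norm_minus_commute)
  then have "complex_of_real s * (B - u) = complex_of_real (L - s) * (u - A)" by (simp add: scaleR_conv_of_real)
  then have "complex_of_real L * u = complex_of_real s * B + complex_of_real (L - s) * A"
    by (simp add: algebra_simps)
  then have "u = (complex_of_real s * B + complex_of_real (L - s) * A) / complex_of_real L"
    using Lp by (simp add: field_simps)
  then show ?thesis using Lp by (simp add: field_simps)
qed

lemma cong3:
  fixes x y z X Y Z :: complex
  assumes "cmod (x - y) = cmod (X - Y)" "cmod (y - z) = cmod (Y - Z)" "cmod (z - x) = cmod (Z - X)"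
  shows "cmod (complex_of_real a * (x - z) + complex_of_real b * (y - z)) = cmod (complex_of_real a * (X - Z) + complex_of_real b * (Y - Z))"
proof -
  have key: "\<And>u v. (cmod (complex_of_real a * u + complex_of_real b * v))\<^sup>2 =
      a\<^sup>2 * (cmod u)\<^sup>2 + b\<^sup>2 * (cmod v)\<^sup>2 + a * b * ((cmod u)\<^sup>2 + (cmod v)\<^sup>2 - (cmod (u - v))\<^sup>2)"
    by (simp only: cmod_power2) (simp add: power2_eq_square algebra_simps)
  have e1: "cmod (x - z) = cmod (X - Z)" using assms(3) by (simp add: norm_minus_commute)
  have e2: "cmod ((x - z) - (y - z)) = cmod ((X - Z) - (Y - Z))" using assms(1) by simp
  have "(cmod (complex_of_real a * (x - z) + complex_of_real b * (y - z)))\<^sup>2 =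
        (cmod (complex_of_real a * (X - Z) + complex_of_real b * (Y - Z)))\<^sup>2"
    unfolding key e1 e2 assms(2) ..
  then show ?thesis by (simp add: power2_eq_iff_nonneg)
qed

definition wc :: "real \<times> real \<times> real \<Rightarrow> complex \<Rightarrow> complex \<Rightarrow> complex \<Rightarrow> complex" where
  "wc w x y z = complex_of_real (fst w) * x + complex_of_real (fst (snd w)) * y + complex_of_real (snd (snd w)) * z"

definition wsum :: "real \<times> real \<times> real \<Rightarrow> real" where "wsum w = fst w + fst (snd w) + snd (snd w)"

definition wmix :: "real \<Rightarrow> real \<times> real \<times> real \<Rightarrow> real \<times> real \<times> real \<Rightarrow> real \<times> real \<times> real" where
  "wmix l w w' = ((1 - l) * fst w + l * fst w', (1 - l) * fst (snd w) + l * fst (snd w'), (1 - l) * snd (snd w) + l * snd (snd w'))"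

lemma wmix_wc: "wc w x y z + complex_of_real l * (wc w' x y z - wc w x y z) = wc (wmix l w w') x y z"
  by (simp add: wc_def wmix_def algebra_simps)

lemma wmix_sum: "wsum w = 1 \<Longrightarrow> wsum w' = 1 \<Longrightarrow> wsum (wmix l w w') = 1"
  by (simp add: wsum_def wmix_def algebra_simps) (metis add.assoc distrib_left mult.right_neutral)

lemma cong_aff:
  assumes "cmod (x - y) = cmod (X - Y)" "cmod (y - z) = cmod (Y - Z)" "cmod (z - x) = cmod (Z - X)"
    and "wsum w = 1" "wsum w' = 1"
  shows "cmod (wc w x y z - wc w' x y z) = cmod (wc w X Y Z - wc w' X Y Z)"
proof -
  obtain a1 b1 c1 where w: "w = (a1,b1,c1)" by (cases w) auto
  obtain a2 b2 c2 where w': "w' = (a2,b2,c2)" by (cases w') auto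
  have c: "c1 = 1 - a1 - b1" "c2 = 1 - a2 - b2" using assms(4,5) by (auto simp: w w' wsum_def)
  have d: "\<And>x y z. wc w x y z - wc w' x y z = complex_of_real (a1 - a2) * (x - z) + complex_of_real (b1 - b2) * (y - z)"
    by (simp add: wc_def w w' c algebra_simps)
  show ?thesis unfolding d by (rule cong3[OF assms(1-3)])
qed

context core begin

lemma d_nonneg: "x \<in> realize K \<Longrightarrow> y \<in> realize K \<Longrightarrow> 0 \<le> orth_dist K x y"
  by (simp add: orth_dist_eq)

lemma metric: "metric_on (realize K) (orth_dist K)"
  unfolding metric_on_def
proof (intro conjI ballI)
  fix x y assume x: "x \<in> realize K" and y: "y \<in> realize K"
  show "0 \<le> orth_dist K x y" by (simp add: orth_dist_eq x y)
  show "orth_dist K x y = orth_dist K y x" by (simp add: orth_dist_eq x y norm_minus_commute)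
  show "(orth_dist K x y = 0) = (x = y)"
  proof
    assume "orth_dist K x y = 0"
    then have "Phi x = Phi y" by (simp add: orth_dist_eq x y)
    then show "x = y" using psi_Phi x y by metis
  qed (use y in \<open>simp add: orth_dist_eq\<close>)
next
  fix x y z assume x: "x \<in> realize K" and y: "y \<in> realize K" and z: "z \<in> realize K"
  show "orth_dist K x z \<le> orth_dist K x y + orth_dist K y z"
    using dist_triangle[of "Phi x" "Phi z" "Phi y"] by (simp add: orth_dist_eq x y z dist_norm)
qed

lemma geod_exists:
  assumes a: "a \<in> realize K" and b: "b \<in> realize K"
  shows "\<exists>\<gamma>. geodesic_path (realize K) (orth_dist K) \<gamma> a b"
proof -
  define L where "L = orth_dist K a b"
  have L: "L = cmod (Phi a - Phi b)" using orth_dist_eq[OF a b] by (simp add: L_def)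
  define g where "g s = Phi a + complex_of_real (s / L) * (Phi b - Phi a)" for s
  define \<gamma> where "\<gamma> s = psi (g s)" for s
  have gS: "\<And>s. s \<in> {0..L} \<Longrightarrow> g s \<in> Sq \<and> \<gamma> s \<in> realize K \<and> Phi (\<gamma> s) = g s"
  proof -
    fix s assume s: "s \<in> {0..L}"
    have "0 \<le> s / L" "s / L \<le> 1" using s by (auto simp: divide_le_eq_1)
    then have "g s \<in> Sq" unfolding g_def by (intro Sq_conv Phi_Sq a b)
    then show "g s \<in> Sq \<and> \<gamma> s \<in> realize K \<and> Phi (\<gamma> s) = g s" using psi_in by (simp add: \<gamma>_def)
  qed
  have "geodesic_path (realize K) (orth_dist K) \<gamma> a b"
    unfolding geodesic_path_def L_def[symmetric]
  proof (intro conjI ballI)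
    show "\<gamma> 0 = a" using psi_Phi[OF a] by (simp add: \<gamma>_def g_def)
    show "\<gamma> L = b"
    proof (cases "L = 0")
      case True
      then have "Phi a = Phi b" using L by simp
      then have "a = b" using psi_Phi a b by metis
      then show ?thesis using psi_Phi[OF a] True by (simp add: \<gamma>_def g_def)
    next
      case False
      then show ?thesis using psi_Phi[OF b] by (simp add: \<gamma>_def g_def)
    qed
    fix s assume s: "s \<in> {0..L}"
    show "\<gamma> s \<in> realize K" using gS[OF s] by blast
    fix t assume t: "t \<in> {0..L}"
    have "orth_dist K (\<gamma> s) (\<gamma> t) = cmod (g s - g t)" using gS[OF s] gS[OF t] orth_dist_eq by metis
    also have "g s - g t = complex_of_real ((s - t) / L) * (Phi b - Phi a)" by (simp add: g_def algebra_simps diff_divide_distrib)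
    also have "cmod \<dots> = \<bar>(s - t) / L\<bar> * cmod (Phi b - Phi a)" by (simp only: norm_mult norm_of_real)
    also have "\<dots> = \<bar>s - t\<bar> / \<bar>L\<bar> * L" by (simp add: abs_divide L norm_minus_commute)
    also have "\<dots> = \<bar>s - t\<bar>" using s t by (cases "L = 0") auto
    finally show "orth_dist K (\<gamma> s) (\<gamma> t) = \<bar>s - t\<bar>" .
  qed
  then show ?thesis by blast
qed

lemma geod_line:
  assumes g: "geodesic_path (realize K) (orth_dist K) \<gamma> a b" and a: "a \<in> realize K" and b: "b \<in> realize K"
    and s: "s \<in> {0..orth_dist K a b}"
  shows "Phi (\<gamma> s) = Phi a + complex_of_real (s / orth_dist K a b) * (Phi b - Phi a)"
proof -
  let ?L = "orth_dist K a b"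
  have L0: "0 \<le> ?L" using d_nonneg[OF a b] .
  have g0: "\<gamma> 0 = a" and gL: "\<gamma> ?L = b" using g by (auto simp: geodesic_path_def)
  have gs: "\<gamma> s \<in> realize K" using g s by (auto simp: geodesic_path_def)
  have m: "?L \<in> {0..?L}" "0 \<in> {0..?L}" using L0 by auto
  have iso: "\<forall>s\<in>{0..?L}. \<forall>t\<in>{0..?L}. orth_dist K (\<gamma> s) (\<gamma> t) = \<bar>s - t\<bar>" using g by (simp add: geodesic_path_def)
  have d1: "orth_dist K (\<gamma> s) (\<gamma> 0) = \<bar>s - 0\<bar>" using iso s m by blast
  have d2: "orth_dist K (\<gamma> s) (\<gamma> ?L) = \<bar>s - ?L\<bar>" using iso s m by blast
  have "orth_dist K (\<gamma> s) a = s" using d1 g0 s by simp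
  then have 1: "cmod (Phi (\<gamma> s) - Phi a) = s" using orth_dist_eq[OF gs a] by simp
  have "orth_dist K (\<gamma> s) b = ?L - s" using d2 gL s by simp
  then have 2: "cmod (Phi (\<gamma> s) - Phi b) = ?L - s" using orth_dist_eq[OF gs b] by simp
  have 3: "cmod (Phi a - Phi b) = ?L" using orth_dist_eq[OF a b] by simp
  show ?thesis by (rule seg_point[OF 3 _ _ 1 2]) (use s in auto)
qed

end

context core begin

lemma pair_cmp:
  assumes c: "cmod (x - y) = cmod (X - Y)" "cmod (y - z) = cmod (Y - Z)" "cmod (z - x) = cmod (Z - X)"
    and g: "geodesic_path (realize K) (orth_dist K) \<gamma> a b" and ab: "a \<in> realize K" "b \<in> realize K"
    and wa: "wsum wa = 1" "Phi a = wc wa x y z" and wb: "wsum wb = 1" "Phi b = wc wb x y z"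
    and g': "geodesic_path (realize K) (orth_dist K) \<gamma>' a' b'" and ab': "a' \<in> realize K" "b' \<in> realize K"
    and wa': "wsum wa' = 1" "Phi a' = wc wa' x y z" and wb': "wsum wb' = 1" "Phi b' = wc wb' x y z"
    and s: "s \<in> {0..orth_dist K a b}" and t: "t \<in> {0..orth_dist K a' b'}"
  shows "orth_dist K (\<gamma> s) (\<gamma>' t) \<le> cmod (cmp_pt (wc wa X Y Z) (wc wb X Y Z) (orth_dist K a b) s
                                            - cmp_pt (wc wa' X Y Z) (wc wb' X Y Z) (orth_dist K a' b') t)"
proof -
  let ?l = "s / orth_dist K a b" and ?m = "t / orth_dist K a' b'"
  have gs: "\<gamma> s \<in> realize K" using g s by (auto simp: geodesic_path_def)
  have gt: "\<gamma>' t \<in> realize K" using g' t by (auto simp: geodesic_path_def)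
  have "orth_dist K (\<gamma> s) (\<gamma>' t) = cmod (Phi (\<gamma> s) - Phi (\<gamma>' t))" by (rule orth_dist_eq[OF gs gt])
  also have "Phi (\<gamma> s) = wc (wmix ?l wa wb) x y z" unfolding geod_line[OF g ab s] wa(2) wb(2) wmix_wc ..
  also have "Phi (\<gamma>' t) = wc (wmix ?m wa' wb') x y z" unfolding geod_line[OF g' ab' t] wa'(2) wb'(2) wmix_wc ..
  also have "cmod (wc (wmix ?l wa wb) x y z - wc (wmix ?m wa' wb') x y z) =
             cmod (wc (wmix ?l wa wb) X Y Z - wc (wmix ?m wa' wb') X Y Z)"
    by (rule cong_aff[OF c wmix_sum[OF wa(1) wb(1)] wmix_sum[OF wa'(1) wb'(1)]])
  also have "\<dots> = cmod (cmp_pt (wc wa X Y Z) (wc wb X Y Z) (orth_dist K a b) s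
                     - cmp_pt (wc wa' X Y Z) (wc wb' X Y Z) (orth_dist K a' b') t)"
    unfolding cmp_pt_def wmix_wc ..
  finally show ?thesis by simp
qed

lemma core_CAT0: "CAT0 (realize K) (orth_dist K)"
  unfolding CAT0_def
proof (intro conjI)
  show "metric_on (realize K) (orth_dist K)" by (rule metric)
  show "\<forall>a\<in>realize K. \<forall>b\<in>realize K. \<exists>\<gamma>. geodesic_path (realize K) (orth_dist K) \<gamma> a b" using geod_exists by blast
next
  show "\<forall>p\<in>realize K. \<forall>q\<in>realize K. \<forall>r\<in>realize K. \<forall>\<gamma>1 \<gamma>2 \<gamma>3 P Q R.
       geodesic_path (realize K) (orth_dist K) \<gamma>1 p q \<and> geodesic_path (realize K) (orth_dist K) \<gamma>2 q r \<and>
       geodesic_path (realize K) (orth_dist K) \<gamma>3 r p \<and>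
       cmod (P - Q) = orth_dist K p q \<and> cmod (Q - R) = orth_dist K q r \<and> cmod (R - P) = orth_dist K r p \<longrightarrow>
       (\<forall>(\<gamma>, A, B, L) \<in> {(\<gamma>1, P, Q, orth_dist K p q), (\<gamma>2, Q, R, orth_dist K q r), (\<gamma>3, R, P, orth_dist K r p)}.
        \<forall>(\<gamma>', A', B', L') \<in> {(\<gamma>1, P, Q, orth_dist K p q), (\<gamma>2, Q, R, orth_dist K q r), (\<gamma>3, R, P, orth_dist K r p)}.
        \<forall>s\<in>{0..L}. \<forall>t\<in>{0..L'}.
          orth_dist K (\<gamma> s) (\<gamma>' t) \<le> cmod (cmp_pt A B L s - cmp_pt A' B' L' t))"
  proof ((rule ballI)+, (rule allI)+, rule impI)
  fix p q r \<gamma>1 \<gamma>2 \<gamma>3 P Q R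
  assume p: "p \<in> realize K" and q: "q \<in> realize K" and r: "r \<in> realize K"
  assume H: "geodesic_path (realize K) (orth_dist K) \<gamma>1 p q \<and> geodesic_path (realize K) (orth_dist K) \<gamma>2 q r \<and>
       geodesic_path (realize K) (orth_dist K) \<gamma>3 r p \<and>
       cmod (P - Q) = orth_dist K p q \<and> cmod (Q - R) = orth_dist K q r \<and> cmod (R - P) = orth_dist K r p"
  let ?x = "Phi p" and ?y = "Phi q" and ?z = "Phi r"
  have c: "cmod (?x - ?y) = cmod (P - Q)" "cmod (?y - ?z) = cmod (Q - R)" "cmod (?z - ?x) = cmod (R - P)"
    using H orth_dist_eq p q r by auto
  define w1 where "w1 = ((1::real),(0::real),(0::real))"
  define w2 where "w2 = ((0::real),(1::real),(0::real))"
  define w3 where "w3 = ((0::real),(0::real),(1::real))"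
  have ws: "wsum w1 = 1" "wsum w2 = 1" "wsum w3 = 1" by (auto simp: wsum_def w1_def w2_def w3_def)
  have wx: "\<And>x y z. wc w1 x y z = x" "\<And>x y z. wc w2 x y z = y" "\<And>x y z. wc w3 x y z = z"
    by (auto simp: wc_def w1_def w2_def w3_def)
  let ?S = "{(\<gamma>1, P, Q, orth_dist K p q), (\<gamma>2, Q, R, orth_dist K q r), (\<gamma>3, R, P, orth_dist K r p)}"
  have side: "\<And>\<gamma> A B L. (\<gamma>, A, B, L) \<in> ?S \<Longrightarrow> \<exists>a b wa wb. geodesic_path (realize K) (orth_dist K) \<gamma> a b \<and>
      a \<in> realize K \<and> b \<in> realize K \<and> L = orth_dist K a b \<and> A = wc wa P Q R \<and> B = wc wb P Q R \<and>
      wsum wa = 1 \<and> Phi a = wc wa ?x ?y ?z \<and> wsum wb = 1 \<and> Phi b = wc wb ?x ?y ?z"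
  proof -
    fix \<gamma> A B L assume "(\<gamma>, A, B, L) \<in> ?S"
    then consider "(\<gamma>, A, B, L) = (\<gamma>1, P, Q, orth_dist K p q)" | "(\<gamma>, A, B, L) = (\<gamma>2, Q, R, orth_dist K q r)"
      | "(\<gamma>, A, B, L) = (\<gamma>3, R, P, orth_dist K r p)" by blast
    then show "?thesis \<gamma> A B L"
    proof cases
      case 1 then show ?thesis using H p q ws wx by (intro exI[of _ p] exI[of _ q] exI[of _ w1] exI[of _ w2]) auto
    next
      case 2 then show ?thesis using H q r ws wx by (intro exI[of _ q] exI[of _ r] exI[of _ w2] exI[of _ w3]) auto
    next
      case 3 then show ?thesis using H r p ws wx by (intro exI[of _ r] exI[of _ p] exI[of _ w3] exI[of _ w1]) auto
    qed
  qed
  have all: "\<And>\<gamma> A B L \<gamma>' A' B' L' s t. (\<gamma>, A, B, L) \<in> ?S \<Longrightarrow> (\<gamma>', A', B', L') \<in> ?S \<Longrightarrow> s \<in> {0..L} \<Longrightarrow> t \<in> {0..L'} \<Longrightarrow>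
     orth_dist K (\<gamma> s) (\<gamma>' t) \<le> cmod (cmp_pt A B L s - cmp_pt A' B' L' t)"
  proof -
    fix \<gamma> A B L \<gamma>' A' B' L' s t
    assume m: "(\<gamma>, A, B, L) \<in> ?S" "(\<gamma>', A', B', L') \<in> ?S" and st: "s \<in> {0..L}" "t \<in> {0..L'}"
    obtain a b wa wb where 1: "geodesic_path (realize K) (orth_dist K) \<gamma> a b"
      "a \<in> realize K" "b \<in> realize K" "L = orth_dist K a b" "A = wc wa P Q R" "B = wc wb P Q R"
      "wsum wa = 1" "Phi a = wc wa ?x ?y ?z" "wsum wb = 1" "Phi b = wc wb ?x ?y ?z"
      using side[OF m(1)] by blast
    obtain a' b' wa' wb' where 2: "geodesic_path (realize K) (orth_dist K) \<gamma>' a' b'"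
      "a' \<in> realize K" "b' \<in> realize K" "L' = orth_dist K a' b'" "A' = wc wa' P Q R" "B' = wc wb' P Q R"
      "wsum wa' = 1" "Phi a' = wc wa' ?x ?y ?z" "wsum wb' = 1" "Phi b' = wc wb' ?x ?y ?z"
      using side[OF m(2)] by blast
    show "orth_dist K (\<gamma> s) (\<gamma>' t) \<le> cmod (cmp_pt A B L s - cmp_pt A' B' L' t)"
      using pair_cmp[OF c 1(1-3) 1(7,8) 1(9,10) 2(1-3) 2(7,8) 2(9,10)] st 1(4-6) 2(4-6) by simp
  qed
  show "\<forall>(\<gamma>, A, B, L)\<in>?S. \<forall>(\<gamma>', A', B', L')\<in>?S. \<forall>s\<in>{0..L}. \<forall>t\<in>{0..L'}.
          orth_dist K (\<gamma> s) (\<gamma>' t) \<le> cmod (cmp_pt A B L s - cmp_pt A' B' L' t)"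
    using all by fast
  qed
qed

end

definition pl :: "nat \<Rightarrow> int \<times> int \<times> int \<Rightarrow> int \<times> int" where
  "pl j q = (if j = 1 then (fst (snd q), snd (snd q)) else if j = 2 then (fst q, snd (snd q)) else (fst q, fst (snd q)))"

definition ingrid :: "int \<times> int \<Rightarrow> bool" where
  "ingrid g = ((fst g = -1 \<or> fst g = 0 \<or> fst g = 1) \<and> (snd g = -1 \<or> snd g = 0 \<or> snd g = 1))"

lemma ingrid: "ingrid g \<longleftrightarrow> g \<in> grid"
  by (cases g) (auto simp: ingrid_def grid_def)

definition Q1 :: bool where
  "Q1 = list_all (\<lambda>t. list_all (\<lambda>i. list_all (\<lambda>j. list_all (\<lambda>e. cmp j (sp t (pp i)) = e \<longrightarrow>
      tyof (pl j (sp t (pp i))) = i \<and> ingrid (pl j (sp t (pp i)))) [1,-1]) [1,2,3]) [S1,S2,S3]) allkeys"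
definition Q2 :: bool where
  "Q2 = list_all (\<lambda>t. list_all (\<lambda>j. list_all (\<lambda>e. sp t (pp S1) = ej j e \<longrightarrow>
      list_ex (\<lambda>mm. pl j (sp t (pp S2)) = fst mm \<and> pl j (sp t (pp S3)) = padd (fst mm) (snd mm)) pats) [1,-1]) [1,2,3]) allkeys"
definition Q3 :: bool where
  "Q3 = list_all (\<lambda>j. list_all (\<lambda>e. list_all (\<lambda>mm. list_ex (\<lambda>t. sp t (pp S1) = ej j e \<and>
      pl j (sp t (pp S2)) = fst mm \<and> pl j (sp t (pp S3)) = padd (fst mm) (snd mm) \<and>
      cmp j (sp t (pp S2)) = e \<and> cmp j (sp t (pp S3)) = e) allkeys) pats) [1,-1]) [1,2,3]"
definition Q4 :: bool where
  "Q4 = list_all (\<lambda>j. list_all (\<lambda>e. list_all (\<lambda>g. list_ex (\<lambda>t. list_ex (\<lambda>i. cmp j (sp t (pp i)) = e \<and> pl j (sp t (pp i)) = g) [S1,S2,S3]) allkeys)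
      [(-1,-1),(-1,0),(-1,1),(0,-1),(0,0),(0,1),(1,-1),(1,0),(1,1)]) [1,-1]) [1,2,3]"

lemma Q1: Q1 by code_simp
lemma Q2: Q2 by code_simp
lemma Q3: Q3 by code_simp
lemma Q4: Q4 by code_simp

lemma pt_det: "j \<in> {1,2,3} \<Longrightarrow> cmp j q = cmp j q' \<Longrightarrow> pl j q = pl j q' \<Longrightarrow> q = q'"
  by (cases q; cases q') (auto simp: cmp_def pl_def)

lemma pl_ej: "j \<in> {1,2,3} \<Longrightarrow> pl j (ej j e) = (0,0)"
  by (auto simp: pl_def ej_def)

lemma fst_rho[simp]: "fst (rho v) = fst v" by (simp add: rho_def)

lemma vert_key: "v \<in> verts True \<Longrightarrow> \<exists>t\<in>set allkeys. pt v = sp t (pp (fst v))"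
  using verts_pt_act key_in_allkeys act_sp by metis

lemma j3: "j \<in> {1,2,3} \<Longrightarrow> j \<in> set [1,2,3]" by simp
lemma e2: "e \<in> {1,-1::int} \<Longrightarrow> e \<in> set [1,-1]" by simp

locale bridge =
  fixes D' :: "vertex set set" and j :: nat and e :: int
  assumes j: "j \<in> {1,2,3}" and e: "e \<in> {1,-1}"
    and lift: "is_lift D' {\<sigma>\<in>CB3. \<forall>v\<in>\<sigma>. cmp j (pt v) = e}"
begin

abbreviation "U \<equiv> {\<sigma>\<in>CB3. \<forall>v\<in>\<sigma>. cmp j (pt v) = e}"

definition pos :: "vertex \<Rightarrow> int \<times> int" where "pos v = pl j (pt (rho v))"

lemma sub: "subcomplex D' DB3" and injr: "inj_on rho (\<Union>D')" and img: "(\<lambda>\<sigma>. rho ` \<sigma>) ` D' = U"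
  using lift by (auto simp: is_lift_def)

lemma R1: "v \<in> \<Union>D' \<Longrightarrow> rho v \<in> verts True \<and> cmp j (pt (rho v)) = e"
proof -
  assume "v \<in> \<Union>D'"
  then obtain \<sigma> where "\<sigma> \<in> D'" "v \<in> \<sigma>" by blast
  then have "rho ` \<sigma> \<in> U" using img by blast
  then show ?thesis using \<open>v \<in> \<sigma>\<close> by (auto simp: CB3_iff)
qed

lemma typL: "v \<in> \<Union>D' \<Longrightarrow> fst v = tyof (pos v) \<and> pos v \<in> grid"
proof -
  assume v: "v \<in> \<Union>D'"
  obtain t where t: "t \<in> set allkeys" "pt (rho v) = sp t (pp (fst v))" using vert_key R1[OF v] by fastforce
  have "\<forall>t\<in>set allkeys. \<forall>i\<in>set [S1,S2,S3]. \<forall>j\<in>set [1,2,3]. \<forall>e\<in>set [1,-1]. cmp j (sp t (pp i)) = e \<longrightarrow>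
      tyof (pl j (sp t (pp i))) = i \<and> ingrid (pl j (sp t (pp i)))"
    using Q1 unfolding Q1_def list_all_iff .
  from bspec[OF bspec[OF bspec[OF bspec[OF this t(1)] gen_set[of "fst v"]] j3[OF j]] e2[OF e]]
  show ?thesis using R1[OF v] t(2) by (simp add: pos_def ingrid)
qed

lemma rho_eq: "v \<in> \<Union>D' \<Longrightarrow> v' \<in> \<Union>D' \<Longrightarrow> pos v = pos v' \<Longrightarrow> v = v'"
proof -
  assume v: "v \<in> \<Union>D'" and v': "v' \<in> \<Union>D'" and p: "pos v = pos v'"
  have "fst v = fst v'" using typL[OF v] typL[OF v'] p by simp
  moreover have "pt (rho v) = pt (rho v')" using pt_det[OF j] R1[OF v] R1[OF v'] p by (simp add: pos_def)
  ultimately have "rho v = rho v'" using vert_eq R1[OF v] R1[OF v'] by simp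
  then show "v = v'" using injr v v' by (simp add: inj_on_eq_iff)
qed

lemma hinj: "inj_on pos (\<Union>D')" by (rule inj_onI, rule rho_eq)

lemma himg: "pos ` (\<Union>D') = grid"
proof
  show "pos ` (\<Union>D') \<subseteq> grid" using typL by blast
  show "grid \<subseteq> pos ` (\<Union>D')"
  proof
    fix g assume g: "g \<in> grid"
    have gl: "g \<in> set [(-1,-1),(-1,0),(-1,1),(0,-1),(0,0),(0,1),(1,-1),(1,0),(1,1)]" using g by (auto simp: grid_def)
    have "\<forall>j\<in>set [1,2,3]. \<forall>e\<in>set [1,-1]. \<forall>g\<in>set [(-1,-1),(-1,0),(-1,1),(0,-1),(0,0),(0,1),(1,-1),(1,0),(1,1)].
        \<exists>t\<in>set allkeys. \<exists>i\<in>set [S1,S2,S3]. cmp j (sp t (pp i)) = e \<and> pl j (sp t (pp i)) = g"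
      using Q4 unfolding Q4_def list_all_iff list_ex_iff .
    from bspec[OF bspec[OF bspec[OF this j3[OF j]] e2[OF e]] gl]
    obtain t i where ti: "t \<in> set allkeys" "cmp j (sp t (pp i)) = e" "pl j (sp t (pp i)) = g" by blast
    define w where "w = (i, Cset i (sp t (pp i)))"
    have w: "w \<in> verts True" "pt w = sp t (pp i)" using sp_vert[OF ti(1)] by (auto simp: w_def)
    have "{w} \<in> CB3" using w ti(1) by (auto simp: CB3_iff w_def)
    then have "{w} \<in> U" using w ti by simp
    then obtain \<sigma> where s: "\<sigma> \<in> D'" "rho ` \<sigma> = {w}" using img by (metis (no_types, lifting) imageE)
    then obtain v where v: "v \<in> \<sigma>" "rho v = w" by blast
    have "pos v = g" using v w ti by (simp add: pos_def)
    then show "g \<in> pos ` (\<Union>D')" using v s by blast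
  qed
qed

lemma hfin: "finite (\<Union>D')"
proof -
  have "finite grid" by (simp add: grid_def)
  then show ?thesis using himg hinj finite_imageD by metis
qed

lemma K_fwd: "\<sigma> \<in> D' \<Longrightarrow> \<sigma> \<noteq> {} \<and> \<sigma> \<subseteq> \<Union>D' \<and> (\<exists>mm\<in>set pats. pos ` \<sigma> \<subseteq> chamber mm)"
proof -
  assume s: "\<sigma> \<in> D'"
  have ne: "\<sigma> \<noteq> {}" using sub s by (auto simp: subcomplex_def cplx_def)
  have sV: "\<sigma> \<subseteq> \<Union>D'" using s by blast
  have "rho ` \<sigma> \<in> U" using img s by blast
  then obtain t where t: "t \<in> set allkeys" "\<forall>w\<in>rho ` \<sigma>. sp t (pp (fst w)) = pt w" by (auto simp: CB3_iff)
  have tv: "\<And>v. v \<in> \<sigma> \<Longrightarrow> sp t (pp (fst v)) = pt (rho v) \<and> cmp j (pt (rho v)) = e"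
    using t(2) R1 sV by fastforce
  obtain v0 where v0: "v0 \<in> \<sigma>" using ne by blast
  have ex: "list_ex (\<lambda>i. cmp j (sp t (pp i)) = e) [S1,S2,S3]"
    using tv[OF v0] gen_set[of "fst v0"] unfolding list_ex_iff by force
  have C2': "\<forall>t\<in>set allkeys. \<forall>j\<in>set [1,2,3]. \<forall>e\<in>set [1,-1]. list_ex (\<lambda>i. cmp j (sp t (pp i)) = e) [S1,S2,S3] \<longrightarrow>
      (\<exists>\<tau>\<in>set [(1,2,3),(2,1,3),(2,3,1)]. sp (sp t \<tau>) (pp S1) = ej j e \<and> (\<forall>i\<in>set [S1,S2,S3]. cmp j (sp t (pp i)) = e \<longrightarrow> sp (sp t \<tau>) (pp i) = sp t (pp i)))"
    using C2 unfolding C2_def list_all_iff list_ex_iff[of _ "[(1,2,3),(2,1,3),(2,3,1)]"] .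
  from mp[OF bspec[OF bspec[OF bspec[OF C2' t(1)] j3[OF j]] e2[OF e]] ex] obtain \<tau>0 where t0: "\<tau>0 \<in> set [(1,2,3),(2,1,3),(2,3,1)]"
    "sp (sp t \<tau>0) (pp S1) = ej j e" "\<forall>i\<in>set [S1,S2,S3]. cmp j (sp t (pp i)) = e \<longrightarrow> sp (sp t \<tau>0) (pp i) = sp t (pp i)"
    by blast
  have "\<tau>0 \<in> set allkeys" using t0(1) by (auto simp: allkeys_set)
  then have t'k: "sp t \<tau>0 \<in> set allkeys" using sp_comp t(1) by blast
  have Q2': "\<forall>t\<in>set allkeys. \<forall>j\<in>set [1,2,3]. \<forall>e\<in>set [1,-1]. sp t (pp S1) = ej j e \<longrightarrow>
      (\<exists>mm\<in>set pats. pl j (sp t (pp S2)) = fst mm \<and> pl j (sp t (pp S3)) = padd (fst mm) (snd mm))"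
    using Q2 unfolding Q2_def list_all_iff list_ex_iff .
  from mp[OF bspec[OF bspec[OF bspec[OF Q2' t'k] j3[OF j]] e2[OF e]] t0(2)]
  obtain mm where mm: "mm \<in> set pats" "pl j (sp (sp t \<tau>0) (pp S2)) = fst mm" "pl j (sp (sp t \<tau>0) (pp S3)) = padd (fst mm) (snd mm)"
    by blast
  have "pos ` \<sigma> \<subseteq> chamber mm"
  proof
    fix g assume "g \<in> pos ` \<sigma>"
    then obtain v where v: "v \<in> \<sigma>" "g = pos v" by blast
    have "sp (sp t \<tau>0) (pp (fst v)) = pt (rho v)" using t0(3) tv[OF v(1)] gen_set by metis
    then have "pos v = pl j (sp (sp t \<tau>0) (pp (fst v)))" by (simp add: pos_def)
    then show "g \<in> chamber mm" using v mm t0(2) pl_ej[OF j] by (cases "fst v") (auto simp: chamber_def)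
  qed
  then show ?thesis using ne sV mm(1) by blast
qed

lemma K_bwd:
  assumes ne: "\<sigma> \<noteq> {}" and sV: "\<sigma> \<subseteq> \<Union>D'" and mm: "mm \<in> set pats" and ch: "pos ` \<sigma> \<subseteq> chamber mm"
  shows "\<sigma> \<in> D'"
proof -
  have Q3': "\<forall>j\<in>set [1,2,3]. \<forall>e\<in>set [1,-1]. \<forall>mm\<in>set pats. \<exists>t\<in>set allkeys. sp t (pp S1) = ej j e \<and>
      pl j (sp t (pp S2)) = fst mm \<and> pl j (sp t (pp S3)) = padd (fst mm) (snd mm) \<and>
      cmp j (sp t (pp S2)) = e \<and> cmp j (sp t (pp S3)) = e"
    using Q3 unfolding Q3_def list_all_iff list_ex_iff .
  from bspec[OF bspec[OF bspec[OF Q3' j3[OF j]] e2[OF e]] mm]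
  obtain t where t: "t \<in> set allkeys" "sp t (pp S1) = ej j e" "pl j (sp t (pp S2)) = fst mm"
    "pl j (sp t (pp S3)) = padd (fst mm) (snd mm)" "cmp j (sp t (pp S2)) = e" "cmp j (sp t (pp S3)) = e" by blast
  have pf: "tyof (0,0) = S1" "tyof (fst mm) = S2" "tyof (padd (fst mm) (snd mm)) = S3"
    using pats_facts[OF mm] by (auto simp: tyof_def)
  have agree: "\<And>v. v \<in> \<sigma> \<Longrightarrow> sp t (pp (fst v)) = pt (rho v)"
  proof -
    fix v assume v: "v \<in> \<sigma>"
    then have vV: "v \<in> \<Union>D'" using sV by blast
    have ty: "fst v = tyof (pos v)" using typL[OF vV] by blast
    have pc: "pos v \<in> chamber mm" using ch v by blast
    have "cmp j (sp t (pp (fst v))) = e \<and> pl j (sp t (pp (fst v))) = pos v"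
    proof -
      consider "pos v = (0,0)" | "pos v = fst mm" | "pos v = padd (fst mm) (snd mm)" using pc by (auto simp: chamber_def)
      then show ?thesis
      proof cases
        case 1 then show ?thesis using ty pf t(2) pl_ej[OF j] cmp_ej[OF j] by simp
      next
        case 2 then show ?thesis using ty pf t(3,5) by simp
      next
        case 3 then show ?thesis using ty pf t(4,6) by simp
      qed
    qed
    then show "sp t (pp (fst v)) = pt (rho v)" using pt_det[OF j] R1[OF vV] by (simp add: pos_def)
  qed
  have "finite \<sigma>" using hfin sV finite_subset by blast
  then have f: "finite (rho ` \<sigma>)" by simp
  have n: "rho ` \<sigma> \<noteq> {}" using ne by simp
  have vs: "rho ` \<sigma> \<subseteq> verts True" using R1 sV by blast
  have ag: "\<forall>w\<in>rho ` \<sigma>. sp t (pp (fst w)) = pt w" using agree by simp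
  have "rho ` \<sigma> \<in> CB3" unfolding CB3_iff using f n vs ag t(1) by blast
  moreover have "\<forall>w\<in>rho ` \<sigma>. cmp j (pt w) = e" using R1 sV by blast
  ultimately have "rho ` \<sigma> \<in> U" by blast
  then obtain \<tau> where tau: "\<tau> \<in> D'" "rho ` \<tau> = rho ` \<sigma>" using img by (metis (no_types, lifting) imageE)
  have "\<tau> \<subseteq> \<Union>D'" using tau by blast
  then have "\<tau> = \<sigma>" using inj_on_image_eq_iff[OF injr \<open>\<tau> \<subseteq> \<Union>D'\<close> sV] tau(2) by blast
  then show ?thesis using tau by simp
qed

lemma is_core: "core D' pos"
proof
  show "finite (\<Union>D')" by (rule hfin)
  show "inj_on pos (\<Union>D')" by (rule hinj)
  show "pos ` (\<Union>D') = grid" by (rule himg)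
  show "\<forall>v\<in>\<Union>D'. fst v = tyof (pos v)" using typL by blast
  fix \<sigma> show "\<sigma> \<in> D' \<longleftrightarrow> \<sigma> \<noteq> {} \<and> \<sigma> \<subseteq> \<Union>D' \<and> (\<exists>mm\<in>set pats. pos ` \<sigma> \<subseteq> chamber mm)"
    using K_fwd K_bwd by blast
qed

end

theorem mainTheorem13:
  assumes "falk_s3 D'"
  shows "CAT0 (realize D') (orth_dist D')"
proof -
  obtain j e where "j \<in> {1,2,3}" "e \<in> {1,-1::int}" "is_lift D' {\<sigma>\<in>CB3. \<forall>v\<in>\<sigma>. cmp j (pt v) = e}"
    using falk_U[OF assms] by blast
  then interpret bridge D' j e by unfold_locales
  interpret core D' pos by (rule is_core)
  show ?thesis by (rule core_CAT0)
qed

end
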